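(* Let $\mu>0$ and let $\omega^2$ denote the Fourier multiplier operator on $2\pi$-periodic functions with symbol either (i) $\omega^2(k)=\dfrac{1+\mu^2k^2/6}{1+\mu^2k^2/2}\,k^2$, or (ii) $\omega^2(k)=k\,\dfrac{\tanh(\mu k)}{\mu}$. For any positive number $d$, there exist real numbers $\lambda$ and $\nu$ such that the solution $(\eta^e,q^e)$ of \[ \eta^e_t=-\lambda\,\eta^e+\omega^2 q^e,\qquad q^e_t=-(1+\nu)\,\eta^e, \] for $x\in[0,2\pi]$, $t\ge 0$, with periodic boundary conditions in $x$, satisfies \[ \|\eta^e(\cdot,t)\|_2\le C e^{-dt},\qquad \|q^e_x(\cdot,t)\|_2\le Ce^{-dt}\quad\text{for all }t\ge0, \] where $C$ is a constant depending on the initial condition.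
   Context: All functions are real-valued and $2\pi$-periodic in $x$; $\|\cdot\|_2$ is the $L^2([0,2\pi])$ norm. A Fourier multiplier with symbol $m(k)$ acts on Fourier coefficients by $\hat f_k\mapsto m(k)\hat f_k$. Choice (i) corresponds to the "regularised Boussinesq" model and choice (ii) to the "regularised Boussinesq-Whitham" model. *)

theory Defs
  imports "HOL-Analysis.Analysis"
begin

definition fourier_coeff :: "(real \<Rightarrow> real) \<Rightarrow> int \<Rightarrow> complex" where
  "fourier_coeff f k =
     integral {0..2*pi} (\<lambda>x. complex_of_real (f x) * exp (- (\<i> * of_int k * complex_of_real x)))
       / complex_of_real (2*pi)"

definition l2norm :: "(real \<Rightarrow> real) \<Rightarrow> real" where
  "l2norm f = sqrt (integral {0..2*pi} (\<lambda>x. (f x)\<^sup>2))"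

definition omega2_i :: "real \<Rightarrow> int \<Rightarrow> real" where
  "omega2_i \<mu> k = (1 + \<mu>\<^sup>2 * (real_of_int k)\<^sup>2 / 6) / (1 + \<mu>\<^sup>2 * (real_of_int k)\<^sup>2 / 2)
                    * (real_of_int k)\<^sup>2"

definition omega2_ii :: "real \<Rightarrow> int \<Rightarrow> real" where
  "omega2_ii \<mu> k = real_of_int k * tanh (\<mu> * real_of_int k) / \<mu>"

text \<open>(eta, q), indexed as eta t x, is a (classical) solution for t >= 0 of
  eta_t = -lambda eta + omega^2 q,  q_t = -(1+nu) eta, 2pi-periodic in x,
  where omega^2 is the Fourier multiplier with symbol m (W t = omega^2 (q t)).\<close>
definition is_solution ::
  "(int \<Rightarrow> real) \<Rightarrow> real \<Rightarrow> real \<Rightarrow> (real \<Rightarrow> real \<Rightarrow> real) \<Rightarrow> (real \<Rightarrow> real \<Rightarrow> real) \<Rightarrow> bool" where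
  "is_solution m lam nu eta q \<longleftrightarrow>
     (\<exists>eta_t q_t q_x W.
        (\<forall>t x. eta t (x + 2*pi) = eta t x \<and> q t (x + 2*pi) = q t x) \<and>
        continuous_on ({0..} \<times> UNIV) (\<lambda>(t,x). eta t x) \<and>
        continuous_on ({0..} \<times> UNIV) (\<lambda>(t,x). q t x) \<and>
        continuous_on ({0..} \<times> UNIV) (\<lambda>(t,x). eta_t t x) \<and>
        continuous_on ({0..} \<times> UNIV) (\<lambda>(t,x). q_t t x) \<and>
        continuous_on ({0..} \<times> UNIV) (\<lambda>(t,x). q_x t x) \<and>
        continuous_on ({0..} \<times> UNIV) (\<lambda>(t,x). W t x) \<and>
        (\<forall>t\<ge>0. \<forall>x. ((\<lambda>s. eta s x) has_real_derivative eta_t t x) (at t within {0..})) \<and>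
        (\<forall>t\<ge>0. \<forall>x. ((\<lambda>s. q s x) has_real_derivative q_t t x) (at t within {0..})) \<and>
        (\<forall>t\<ge>0. \<forall>x. ((\<lambda>y. q t y) has_real_derivative q_x t x) (at x)) \<and>
        (\<forall>t\<ge>0. \<forall>k. fourier_coeff (W t) k = complex_of_real (m k) * fourier_coeff (q t) k) \<and>
        (\<forall>t\<ge>0. \<forall>x. eta_t t x = - lam * eta t x + W t x) \<and>
        (\<forall>t\<ge>0. \<forall>x. q_t t x = - (1 + nu) * eta t x))"

end

theory Submission
  imports Defs "HOL-Analysis.Analysis"
begin


lemma dec_from_deriv:
  fixes g g' :: "real \<Rightarrow> real"
  assumes "t0 \<le> t1" "\<And>x. x \<in> {t0..t1} \<Longrightarrow> (g has_real_derivative g' x) (at x within {t0..t1})"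
    "\<And>x. x \<in> {t0..t1} \<Longrightarrow> g' x \<le> 0"
  shows "g t1 \<le> g t0"
proof -
  have "(g' has_integral (g t1 - g t0)) {t0..t1}"
    using assms by (intro fundamental_theorem_of_calculus)
       (auto simp: has_real_derivative_iff_has_vector_derivative[symmetric])
  moreover have "((\<lambda>_. 0::real) has_integral 0) {t0..t1}" by simp
  ultimately have "g t1 - g t0 \<le> 0"
    using assms(3) by (rule has_integral_le) 
  then show ?thesis by simp
qed

lemma dec_from_deriv0:
  fixes g g' :: "real \<Rightarrow> real"
  assumes "0 \<le> t0" "t0 \<le> t1" "\<And>x. x \<ge> 0 \<Longrightarrow> (g has_real_derivative g' x) (at x within {0..})"
    "\<And>x. x \<ge> 0 \<Longrightarrow> g' x \<le> 0"
  shows "g t1 \<le> g t0"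
proof (rule dec_from_deriv[OF assms(2)])
  fix x assume x: "x \<in> {t0..t1}"
  then show "g' x \<le> 0" using assms by auto
  show "(g has_real_derivative g' x) (at x within {t0..t1})"
    using assms(1) x by (intro DERIV_subset[OF assms(3)]) auto
qed

lemma cont_from_deriv0:
  fixes g :: "real \<Rightarrow> real"
  assumes "\<And>x. x \<ge> 0 \<Longrightarrow> (g has_real_derivative g' x) (at x within {0..})"
  shows "continuous_on {0..} g"
  using assms unfolding continuous_on_eq_continuous_within
  by (meson DERIV_continuous atLeast_iff)

lemma mode_decay:
  fixes u v :: "real \<Rightarrow> real" and lam a m k t :: real
  assumes lam: "lam > 0" and a: "a > 0" and m: "m > 0"
   and big: "a* m \<ge> ((2+lam)* exp(2* lam))^2"
   and du: "\<And>t. t \<ge> 0 \<Longrightarrow> (u has_real_derivative (-lam* u t + m* v t)) (at t within {0..})"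
   and dv: "\<And>t. t \<ge> 0 \<Longrightarrow> (v has_real_derivative (-a* u t)) (at t within {0..})"
   and t: "t \<ge> 0"
  shows "(u t)^2 + k^2*(v t)^2 \<le> 12* exp(2* lam)* exp(-(lam/3)* t) * integral {0..1} (\<lambda>s. (u s)^2 + k^2*(v s)^2)"
proof -
  define E where "E s = a*(u s)^2 + m*(v s)^2" for s
  define C where "C s = u s * v s" for s
  define S where "S = sqrt (a* m)"
  have S0: "S > 0" using a m by (simp add: S_def)
  have SS: "S* S = a* m" using a m by (simp add: S_def)
  have Sbig: "S \<ge> (2+lam)*exp(2*lam)"
  proof -
    have "sqrt (((2+lam)*exp(2*lam))^2) \<le> S" unfolding S_def by (rule real_sqrt_le_mono[OF big])
    moreover have "sqrt (((2+lam)*exp(2*lam))^2) = (2+lam)*exp(2*lam)" using lam by simp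
    ultimately show ?thesis by simp
  qed
  have e1: "exp(2*lam) \<ge> 1" using lam by simp
  have Slam: "S \<ge> lam"
  proof -
    have "(2+lam)*1 \<le> (2+lam)*exp(2*lam)" using e1 lam by (intro mult_left_mono) auto
    then show ?thesis using Sbig by simp
  qed
  have Sbig2: "2 + lam \<le> S * exp(-2* lam)"
  proof -
    have "(2+lam) = (2+lam)* exp(2* lam)* exp(-2* lam)" by (simp add: exp_minus field_simps)
    also have "\<dots> \<le> S * exp(-2* lam)" using Sbig by (intro mult_right_mono) auto
    finally show ?thesis .
  qed
  have E0: "E s \<ge> 0" for s using a m unfolding E_def by (intro add_nonneg_nonneg) auto
  have EU: "a*(u s)^2 \<le> E s" for s using m unfolding E_def by simp
  have EV: "m*(v s)^2 \<le> E s" for s using a unfolding E_def by simp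
  have Cb: "\<bar>C s\<bar> \<le> E s / (2* S)" for s
  proof -
    have "0 \<le> (sqrt a * \<bar>u s\<bar> - sqrt m * \<bar>v s\<bar>)^2" by simp
    also have "\<dots> = (sqrt a)^2*\<bar>u s\<bar>^2 + (sqrt m)^2*\<bar>v s\<bar>^2 - 2*(sqrt a* sqrt m)*(\<bar>u s\<bar>*\<bar>v s\<bar>)"
      by algebra
    also have "\<dots> = a*(u s)^2 + m*(v s)^2 - 2*(sqrt a* sqrt m)*\<bar>u s* v s\<bar>"
      using a m by (simp add: abs_mult)
    finally have "2* S*\<bar>C s\<bar> \<le> E s"
      unfolding S_def E_def C_def by (simp add: real_sqrt_mult)
    then show ?thesis using S0 by (simp add: field_simps)
  qed
  have dE: "(E has_real_derivative (-2* a* lam*(u s)^2)) (at s within {0..})" if "s \<ge> 0" for s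
  proof -
    have "(E has_real_derivative (a*(2* u s*(-lam* u s + m* v s)) + m*(2* v s*(-a* u s)))) (at s within {0..})"
      unfolding E_def using du[OF that] dv[OF that]
      by (auto intro!: derivative_eq_intros)
    then show ?thesis by (simp add: algebra_simps power2_eq_square)
  qed
  have dC: "(C has_real_derivative (-lam* C s + m*(v s)^2 - a*(u s)^2)) (at s within {0..})" if "s \<ge> 0" for s
  proof -
    have "(C has_real_derivative ((-lam* u s + m* v s)* v s + u s*(-a* u s))) (at s within {0..})"
      unfolding C_def using du[OF that] dv[OF that]
      by (auto intro!: derivative_eq_intros)
    then show ?thesis by (simp add: algebra_simps power2_eq_square C_def)
  qed
  have Edec: "E s2 \<le> E s1" if "0 \<le> s1" "s1 \<le> s2" for s1 s2
    using that by (intro dec_from_deriv0[OF _ _ dE]) (auto intro!: mult_nonneg_nonneg simp: a lam less_imp_le)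
  have Elow: "E s \<ge> exp(-2* lam* s) * E 0" if "s \<ge> 0" for s
  proof -
    define G where "G s = - (exp(2* lam* s) * E s)" for s
    have dG: "(G has_real_derivative (-(2* lam* exp(2* lam* s)* E s + exp(2* lam* s)*(-2* a* lam*(u s)^2)))) (at s within {0..})"
      if "s \<ge> 0" for s
      unfolding G_def using dE[OF that] by (auto intro!: derivative_eq_intros)
    have "G s \<le> G 0"
    proof (rule dec_from_deriv0[OF _ that dG])
      fix x :: real assume "x \<ge> 0"
      have "2* lam* exp(2* lam* x)*(a*(u x)^2) \<le> 2* lam* exp(2* lam* x)* E x"
        using EU lam by (intro mult_left_mono) auto
      then show "-(2* lam* exp(2* lam* x)* E x + exp(2* lam* x)*(-2* a* lam*(u x)^2)) \<le> 0"
        by (simp add: algebra_simps)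
    qed auto
    then have "E 0 \<le> exp(2* lam* s) * E s" by (simp add: G_def)
    then have "exp(-2* lam* s) * E 0 \<le> exp(-2* lam* s) * (exp(2* lam* s) * E s)"
      by (intro mult_left_mono) auto
    also have "\<dots> = E s" by (simp add: mult.assoc[symmetric] exp_add[symmetric])
    finally show ?thesis .
  qed
  have Edecay: "E s \<le> 3* exp(-(lam/3)* s) * E 0" if "s \<ge> 0" for s
  proof -
    define L where "L s = E s - lam * C s" for s
    have Lb1: "L x \<le> 3/2 * E x" for x
    proof -
      have "lam*\<bar>C x\<bar> \<le> lam*(E x/(2* S))" using Cb lam by (intro mult_left_mono) auto
      also have "\<dots> \<le> S*(E x/(2* S))" using Slam E0[of x] S0 by (intro mult_right_mono) auto
      also have "\<dots> = E x/2" using S0 by simp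
      finally have "lam*\<bar>C x\<bar> \<le> E x/2" .
      moreover have "lam*(- C x) \<le> lam*\<bar>C x\<bar>" using lam by (intro mult_left_mono) auto
      ultimately show ?thesis unfolding L_def by simp
    qed
    have Lb2: "L x \<ge> 1/2 * E x" for x
    proof -
      have "lam*\<bar>C x\<bar> \<le> lam*(E x/(2* S))" using Cb lam by (intro mult_left_mono) auto
      also have "\<dots> \<le> S*(E x/(2* S))" using Slam E0[of x] S0 by (intro mult_right_mono) auto
      also have "\<dots> = E x/2" using S0 by simp
      finally have "lam*\<bar>C x\<bar> \<le> E x/2" .
      moreover have "lam*C x \<le> lam*\<bar>C x\<bar>" using lam by (intro mult_left_mono) auto
      ultimately show ?thesis unfolding L_def by simp
    qed
    have lamC: "lam* lam* C x \<le> lam * E x / 2" for x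
    proof -
      have "lam*\<bar>C x\<bar> \<le> lam*(E x/(2* S))" using Cb lam by (intro mult_left_mono) auto
      also have "\<dots> \<le> S*(E x/(2* S))" using Slam E0[of x] S0 by (intro mult_right_mono) auto
      also have "\<dots> = E x/2" using S0 by simp
      finally have "lam*\<bar>C x\<bar> \<le> E x/2" .
      then have "lam*(lam*\<bar>C x\<bar>) \<le> lam*(E x/2)" using lam by (intro mult_left_mono) auto
      moreover have "C x \<le> \<bar>C x\<bar>" by simp
      then have "lam* lam* C x \<le> lam* lam*\<bar>C x\<bar>" using lam by (intro mult_left_mono) auto
      ultimately show ?thesis by (simp add: mult.assoc)
    qed
    define H where "H s = exp((lam/3)* s) * L s" for s
    have dL: "(L has_real_derivative (-lam* E x + lam* lam* C x)) (at x within {0..})" if "x \<ge> 0" for x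
    proof -
      have "(L has_real_derivative (-2* a* lam*(u x)^2 - lam*(-lam* C x + m*(v x)^2 - a*(u x)^2))) (at x within {0..})"
        unfolding L_def using dE[OF that] dC[OF that] by (auto intro!: derivative_eq_intros)
      then show ?thesis by (simp add: E_def algebra_simps)
    qed
    have dH: "(H has_real_derivative (lam/3* exp((lam/3)* x)* L x + exp((lam/3)* x)*(-lam* E x + lam* lam* C x))) (at x within {0..})"
      if "x \<ge> 0" for x
      unfolding H_def using dL[OF that] by (auto intro!: derivative_eq_intros)
    have "H s \<le> H 0"
    proof (rule dec_from_deriv0[OF _ that dH])
      fix x :: real assume "x \<ge> 0"
      have "lam/3* L x + (-lam* E x + lam* lam* C x) \<le> lam/3*(3/2* E x) + (-lam* E x + lam* E x/2)"
      proof -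
        have "lam/3* L x \<le> lam/3*(3/2* E x)" using Lb1[of x] lam by (intro mult_left_mono) auto
        then show ?thesis using lamC[of x] by linarith
      qed
      also have "\<dots> = 0" by simp
      finally have "exp((lam/3)* x) * (lam/3* L x + (-lam* E x + lam* lam* C x)) \<le> 0"
        by (simp add: mult_nonneg_nonpos)
      then show "lam/3* exp((lam/3)* x)* L x + exp((lam/3)* x)*(-lam* E x + lam* lam* C x) \<le> 0"
        by (simp add: algebra_simps)
    qed auto
    then have "exp((lam/3)* s) * L s \<le> L 0" by (simp add: H_def)
    then have "exp(-(lam/3)* s) * (exp((lam/3)* s) * L s) \<le> exp(-(lam/3)* s) * L 0"
      by (intro mult_left_mono) auto
    then have "L s \<le> exp(-(lam/3)* s) * L 0"
      by (simp add: mult.assoc[symmetric] exp_add[symmetric])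
    also have "\<dots> \<le> exp(-(lam/3)* s) * (3/2* E 0)" using Lb1 by (intro mult_left_mono) auto
    finally have "L s \<le> exp(-(lam/3)* s) * (3/2* E 0)" .
    then show ?thesis using Lb2[of s] by simp
  qed
  have cu: "continuous_on {0..1} u" using cont_from_deriv0[OF du] by (rule continuous_on_subset) auto
  have cv: "continuous_on {0..1} v" using cont_from_deriv0[OF dv] by (rule continuous_on_subset) auto
  define Iu where "Iu = integral {0..1} (\<lambda>s. (u s)^2)"
  define Iv where "Iv = integral {0..1} (\<lambda>s. (v s)^2)"
  define IC where "IC = integral {0..1} C"
  have hu: "((\<lambda>s. (u s)^2) has_integral Iu) {0..1}" unfolding Iu_def
    by (intro integrable_integral integrable_continuous_interval continuous_intros cu)
  have hv: "((\<lambda>s. (v s)^2) has_integral Iv) {0..1}" unfolding Iv_def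
    by (intro integrable_integral integrable_continuous_interval continuous_intros cv)
  have hC: "(C has_integral IC) {0..1}" unfolding IC_def C_def
    by (intro integrable_integral integrable_continuous_interval continuous_intros cu cv)
  have FTC: "((\<lambda>s. -lam* C s + m*(v s)^2 - a*(u s)^2) has_integral (C 1 - C 0)) {0..1}"
  proof (intro fundamental_theorem_of_calculus)
    fix x :: real assume x: "x \<in> {0..1}"
    have "(C has_real_derivative (-lam* C x + m*(v x)^2 - a*(u x)^2)) (at x within {0..1})"
      using x by (intro DERIV_subset[OF dC]) auto
    then show "(C has_vector_derivative (-lam* C x + m*(v x)^2 - a*(u x)^2)) (at x within {0..1})"
      by (simp add: has_real_derivative_iff_has_vector_derivative)
  qed simp
  have HI: "((\<lambda>s. -lam* C s + m*(v s)^2 - a*(u s)^2) has_integral (-lam* IC + m* Iv - a* Iu)) {0..1}"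
    by (intro has_integral_diff has_integral_add has_integral_mult_right hu hv hC)
  have id1: "m* Iv - a* Iu = C 1 - C 0 + lam* IC"
    using has_integral_unique[OF HI FTC] by linarith
  have hE: "((\<lambda>s. E s) has_integral (a* Iu + m* Iv)) {0..1}"
    unfolding E_def by (intro has_integral_add has_integral_mult_right hu hv)
  have hc: "((\<lambda>s::real. exp(-2* lam) * E 0) has_integral (exp(-2* lam) * E 0)) {0..1}"
    using has_integral_const_real[of "exp(-2* lam) * E 0" 0 1] by simp
  have lowE: "exp(-2* lam) * E 0 \<le> E s" if "s \<in> {0..1}" for s
  proof -
    have "exp(-2* lam) * E 0 \<le> exp(-2* lam* s) * E 0"
      using that lam E0[of 0] by (intro mult_right_mono) auto
    then show ?thesis using Elow[of s] that by auto
  qed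
  have Eint: "exp(-2* lam) * E 0 \<le> a* Iu + m* Iv"
    by (rule has_integral_le[OF hc hE lowE])
  have CE0: "\<bar>C s\<bar> \<le> E 0/(2* S)" if "s \<ge> 0" for s
  proof -
    have "E s/(2*S) \<le> E 0/(2*S)" using Edec[of 0 s] that S0 by (intro divide_right_mono) auto
    then show ?thesis using Cb[of s] by linarith
  qed
  have hc1: "((\<lambda>s::real. E 0/(2* S)) has_integral E 0/(2* S)) {0..1}"
    using has_integral_const_real[of "E 0/(2* S)" 0 1] by simp
  have IC1: "IC \<le> E 0/(2* S)"
    by (rule has_integral_le[OF hC hc1]) (use CE0 in \<open>auto simp: abs_le_iff\<close>)
  have hc2: "((\<lambda>s::real. -(E 0/(2* S))) has_integral -(E 0/(2* S))) {0..1}"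
    using has_integral_const_real[of "-(E 0/(2* S))" 0 1] by simp
  have IC2: "-(E 0/(2* S)) \<le> IC"
  proof (rule has_integral_le[OF hc2 hC])
    fix x :: real assume "x \<in> {0..1}"
    then have "\<bar>C x\<bar> \<le> E 0/(2* S)" using CE0 by auto
    then show "-(E 0/(2* S)) \<le> C x" by linarith
  qed
  have "\<bar>C 1 - C 0 + lam* IC\<bar> \<le> E 0/(2* S) + E 0/(2* S) + lam*(E 0/(2* S))"
  proof -
    have "\<bar>IC\<bar> \<le> E 0/(2* S)" using IC1 IC2 by linarith
    then have "lam*\<bar>IC\<bar> \<le> lam*(E 0/(2* S))" using lam by (intro mult_left_mono) auto
    then have "\<bar>lam* IC\<bar> \<le> lam*(E 0/(2* S))" using lam by (simp add: abs_mult)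
    then show ?thesis using CE0[of 0] CE0[of 1] by linarith
  qed
  also have "\<dots> = (2+lam)* E 0/(2* S)" using S0 by (simp add: field_simps)
  also have "\<dots> \<le> S * exp(-2* lam) * E 0/(2* S)"
    using Sbig2 E0[of 0] S0 by (intro divide_right_mono mult_right_mono) auto
  also have "\<dots> = exp(-2* lam) * E 0 / 2" using S0 by simp
  finally have X: "\<bar>m* Iv - a* Iu\<bar> \<le> exp(-2* lam) * E 0 / 2" using id1 by simp
  have AIu: "a* Iu \<ge> exp(-2* lam) * E 0 / 4" using X Eint by linarith
  have MIv: "m* Iv \<ge> exp(-2* lam) * E 0 / 4" using X Eint by linarith
  define K where "K = 3* exp(-(lam/3)* t)"
  have K0: "K \<ge> 0" by (simp add: K_def)
  have Et: "E t \<le> K * E 0" using Edecay[OF t] by (simp add: K_def)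
  have E0u: "E 0 \<le> 4* exp(2* lam)*(a* Iu)"
  proof -
    have "E 0 = exp(2* lam)*(exp(-2* lam) * E 0)" by (simp add: mult.assoc[symmetric] exp_add[symmetric])
    also have "\<dots> \<le> exp(2* lam)*(4*(a* Iu))" using AIu by (intro mult_left_mono) auto
    finally show ?thesis by simp
  qed
  have E0v: "E 0 \<le> 4* exp(2* lam)*(m* Iv)"
  proof -
    have "E 0 = exp(2* lam)*(exp(-2* lam) * E 0)" by (simp add: mult.assoc[symmetric] exp_add[symmetric])
    also have "\<dots> \<le> exp(2* lam)*(4*(m* Iv))" using MIv by (intro mult_left_mono) auto
    finally show ?thesis by simp
  qed
  have "a*(u t)^2 \<le> a*(K*4* exp(2* lam)* Iu)"
    using EU[of t] Et mult_left_mono[OF E0u K0] by (simp add: algebra_simps)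
  then have ut: "(u t)^2 \<le> K*4* exp(2* lam)* Iu" using a by simp
  have "m*(v t)^2 \<le> m*(K*4* exp(2* lam)* Iv)"
    using EV[of t] Et mult_left_mono[OF E0v K0] by (simp add: algebra_simps)
  then have vt: "(v t)^2 \<le> K*4* exp(2* lam)* Iv" using m by simp
  have "integral {0..1} (\<lambda>s. (u s)^2 + k^2*(v s)^2) = Iu + k^2* Iv"
    using has_integral_add[OF hu has_integral_mult_right[OF hv, of "k^2"]] by (simp add: integral_unique)
  moreover have "(u t)^2 + k^2*(v t)^2 \<le> K*4* exp(2* lam)* Iu + k^2*(K*4* exp(2* lam)* Iv)"
    using ut vt by (intro add_mono mult_left_mono) auto
  ultimately show ?thesis by (simp add: K_def algebra_simps)
qed



definition tp :: "(real \<Rightarrow> real) set" where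
  "tp = {g. \<exists>N c d. \<forall>x. g x = (\<Sum>k<N. c k * cos (real k * x) + d k * sin (real k * x))}"

lemma tpI: "(\<And>x. g x = (\<Sum>k<N. c k * cos (real k * x) + d k * sin (real k * x))) \<Longrightarrow> g \<in> tp"
  unfolding tp_def by blast

lemma tp_cong: "(\<And>x. f x = g x) \<Longrightarrow> g \<in> tp \<Longrightarrow> f \<in> tp"
proof -
  assume "\<And>x. f x = g x" "g \<in> tp"
  then have "f = g" by auto
  then show ?thesis using \<open>g \<in> tp\<close> by simp
qed

lemma sum_extend:
  fixes f :: "nat \<Rightarrow> real"
  assumes "N \<le> M"
  shows "(\<Sum>k<N. f k) = (\<Sum>k<M. if k < N then f k else 0)"
  by (rule sum.mono_neutral_cong_left) (use assms in auto)

lemma tp_add: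
  assumes "g1 \<in> tp" "g2 \<in> tp" shows "(\<lambda>x. g1 x + g2 x) \<in> tp"
proof -
  obtain N1 c1 d1 where 1: "\<And>x. g1 x = (\<Sum>k<N1. c1 k * cos (real k * x) + d1 k * sin (real k * x))"
    using assms(1) unfolding tp_def by blast
  obtain N2 c2 d2 where 2: "\<And>x. g2 x = (\<Sum>k<N2. c2 k * cos (real k * x) + d2 k * sin (real k * x))"
    using assms(2) unfolding tp_def by blast
  let ?c = "\<lambda>k. (if k < N1 then c1 k else 0) + (if k < N2 then c2 k else 0)"
  let ?d = "\<lambda>k. (if k < N1 then d1 k else 0) + (if k < N2 then d2 k else 0)"
  show ?thesis
  proof (rule tpI[where N="N1+N2" and c="?c" and d="?d"])
    fix x
    have "g1 x = (\<Sum>k<N1+N2. if k < N1 then c1 k * cos (real k * x) + d1 k * sin (real k * x) else 0)"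
      unfolding 1 by (rule sum_extend) simp
    moreover have "g2 x = (\<Sum>k<N1+N2. if k < N2 then c2 k * cos (real k * x) + d2 k * sin (real k * x) else 0)"
      unfolding 2 by (rule sum_extend) simp
    ultimately have "g1 x + g2 x = (\<Sum>k<N1+N2. (if k < N1 then c1 k * cos (real k * x) + d1 k * sin (real k * x) else 0)
       + (if k < N2 then c2 k * cos (real k * x) + d2 k * sin (real k * x) else 0))"
      by (simp add: sum.distrib)
    also have "\<dots> = (\<Sum>k<N1+N2. ?c k * cos (real k * x) + ?d k * sin (real k * x))"
      by (rule sum.cong) (auto simp: algebra_simps)
    finally show "g1 x + g2 x = (\<Sum>k<N1+N2. ?c k * cos (real k * x) + ?d k * sin (real k * x))" .
  qed
qed

lemma tp_scale:
  assumes "g \<in> tp" shows "(\<lambda>x. r * g x) \<in> tp"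
proof -
  obtain N c d where 1: "\<And>x. g x = (\<Sum>k<N. c k * cos (real k * x) + d k * sin (real k * x))"
    using assms(1) unfolding tp_def by blast
  show ?thesis
    by (rule tpI[where N=N and c="\<lambda>k. r * c k" and d="\<lambda>k. r * d k"])
       (simp add: 1 sum_distrib_left algebra_simps)
qed

lemma tp_const: "(\<lambda>x. r) \<in> tp"
  by (rule tpI[where N=1 and c="\<lambda>k. r" and d="\<lambda>k. 0"]) simp

lemma tp_sum: fixes n :: nat shows "(\<And>i. i < n \<Longrightarrow> f i \<in> tp) \<Longrightarrow> (\<lambda>x. \<Sum>i<n. f i x) \<in> tp"
proof (induction n)
  case 0 then show ?case using tp_const[of 0] by simp
next
  case (Suc n)
  then have "(\<lambda>x. (\<Sum>i<n. f i x) + f n x) \<in> tp" by (intro tp_add) auto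
  then show ?case by simp
qed

lemma tp_cos: "(\<lambda>x. cos (real n * x)) \<in> tp"
proof (rule tpI[where N="Suc n" and c="\<lambda>k. if k = n then 1 else 0" and d="\<lambda>k. 0"])
  fix x
  have "(\<Sum>k<Suc n. (if k = n then 1 else 0) * cos (real k * x) + 0 * sin (real k * x))
        = (\<Sum>k<Suc n. if k = n then cos (real k * x) else 0)"
    by (rule sum.cong) auto
  also have "\<dots> = cos (real n * x)" by (simp add: sum.delta)
  finally show "cos (real n * x) = (\<Sum>k<Suc n. (if k = n then 1 else 0) * cos (real k * x) + 0 * sin (real k * x))"
    by simp
qed

lemma tp_sin: "(\<lambda>x. sin (real n * x)) \<in> tp"
proof (rule tpI[where N="Suc n" and d="\<lambda>k. if k = n then 1 else 0" and c="\<lambda>k. 0"])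
  fix x
  have "(\<Sum>k<Suc n. 0 * cos (real k * x) + (if k = n then 1 else 0) * sin (real k * x))
        = (\<Sum>k<Suc n. if k = n then sin (real k * x) else 0)"
    by (rule sum.cong) auto
  also have "\<dots> = sin (real n * x)" by (simp add: sum.delta)
  finally show "sin (real n * x) = (\<Sum>k<Suc n. 0 * cos (real k * x) + (if k = n then 1 else 0) * sin (real k * x))"
    by simp
qed

lemma tp_cos_diff: "(\<lambda>x. cos ((real j - real k) * x)) \<in> tp"
proof (cases "k \<le> j")
  case True
  then show ?thesis using tp_cos[of "j - k"] by (simp add: of_nat_diff)
next
  case False
  then have "\<And>x. cos ((real j - real k) * x) = cos (real (k - j) * x)"
    by (metis cos_minus minus_diff_eq minus_mult_left nat_le_linear of_nat_diff)
  then show ?thesis using tp_cos by (rule tp_cong)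
qed

lemma tp_sin_diff: "(\<lambda>x. sin ((real j - real k) * x)) \<in> tp"
proof (cases "k \<le> j")
  case True
  then show ?thesis using tp_sin[of "j - k"] by (simp add: of_nat_diff)
next
  case False
  then have "\<And>x. sin ((real j - real k) * x) = (-1) * sin (real (k - j) * x)"
    by (metis sin_minus minus_diff_eq minus_mult_left nat_le_linear of_nat_diff mult_minus1)
  then show ?thesis using tp_scale[OF tp_sin] by (rule tp_cong)
qed

lemma tp_cos_sum: "(\<lambda>x. cos ((real j + real k) * x)) \<in> tp"
  using tp_cos[of "j + k"] by simp

lemma tp_sin_sum: "(\<lambda>x. sin ((real j + real k) * x)) \<in> tp"
  using tp_sin[of "j + k"] by simp

lemma tp_cc: "(\<lambda>x. cos (real j * x) * cos (real k * x)) \<in> tp"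
proof (rule tp_cong)
  fix x show "cos (real j * x) * cos (real k * x) = (1/2) * (cos ((real j - real k) * x) + cos ((real j + real k) * x))"
    by (simp add: cos_times_cos algebra_simps)
  show "(\<lambda>x. (1/2) * (cos ((real j - real k) * x) + cos ((real j + real k) * x))) \<in> tp"
    by (intro tp_scale tp_add tp_cos_diff tp_cos_sum)
qed

lemma tp_ss: "(\<lambda>x. sin (real j * x) * sin (real k * x)) \<in> tp"
proof (rule tp_cong)
  fix x show "sin (real j * x) * sin (real k * x) = (1/2) * (cos ((real j - real k) * x) + (-1) * cos ((real j + real k) * x))"
    using sin_times_sin[of "real j * x" "real k * x"] by (simp add: left_diff_distrib distrib_right)
  show "(\<lambda>x. (1/2) * (cos ((real j - real k) * x) + (-1) * cos ((real j + real k) * x))) \<in> tp"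
    by (intro tp_scale tp_add tp_cos_diff tp_cos_sum)
qed

lemma tp_sc: "(\<lambda>x. sin (real j * x) * cos (real k * x)) \<in> tp"
proof (rule tp_cong)
  fix x show "sin (real j * x) * cos (real k * x) = (1/2) * (sin ((real j + real k) * x) + sin ((real j - real k) * x))"
    using sin_times_cos[of "real j * x" "real k * x"] by (simp add: left_diff_distrib distrib_right)
  show "(\<lambda>x. (1/2) * (sin ((real j + real k) * x) + sin ((real j - real k) * x))) \<in> tp"
    by (intro tp_scale tp_add tp_sin_diff tp_sin_sum)
qed

lemma tp_cs: "(\<lambda>x. cos (real j * x) * sin (real k * x)) \<in> tp"
  using tp_sc[of k j] by (simp add: mult.commute)

lemma tp_mult_cos:
  assumes "g \<in> tp" shows "(\<lambda>x. g x * cos (real j * x)) \<in> tp"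
proof -
  obtain N c d where 1: "\<And>x. g x = (\<Sum>k<N. c k * cos (real k * x) + d k * sin (real k * x))"
    using assms(1) unfolding tp_def by blast
  show ?thesis
  proof (rule tp_cong)
    fix x show "g x * cos (real j * x) = (\<Sum>k<N. c k * (cos (real k * x) * cos (real j * x)) + d k * (sin (real k * x) * cos (real j * x)))"
      unfolding 1 sum_distrib_right by (rule sum.cong) (simp_all add: algebra_simps)
    show "(\<lambda>x. \<Sum>k<N. c k * (cos (real k * x) * cos (real j * x)) + d k * (sin (real k * x) * cos (real j * x))) \<in> tp"
      by (intro tp_sum tp_add tp_scale tp_cc tp_sc)
  qed
qed

lemma tp_mult_sin:
  assumes "g \<in> tp" shows "(\<lambda>x. g x * sin (real j * x)) \<in> tp"
proof -
  obtain N c d where 1: "\<And>x. g x = (\<Sum>k<N. c k * cos (real k * x) + d k * sin (real k * x))"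
    using assms(1) unfolding tp_def by blast
  show ?thesis
  proof (rule tp_cong)
    fix x show "g x * sin (real j * x) = (\<Sum>k<N. c k * (cos (real k * x) * sin (real j * x)) + d k * (sin (real k * x) * sin (real j * x)))"
      unfolding 1 sum_distrib_right by (rule sum.cong) (simp_all add: algebra_simps)
    show "(\<lambda>x. \<Sum>k<N. c k * (cos (real k * x) * sin (real j * x)) + d k * (sin (real k * x) * sin (real j * x))) \<in> tp"
      by (intro tp_sum tp_add tp_scale tp_cs tp_ss)
  qed
qed

lemma tp_mult:
  assumes "g \<in> tp" "h \<in> tp" shows "(\<lambda>x. g x * h x) \<in> tp"
proof -
  obtain N c d where 1: "\<And>x. h x = (\<Sum>k<N. c k * cos (real k * x) + d k * sin (real k * x))"
    using assms(2) unfolding tp_def by blast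
  show ?thesis
  proof (rule tp_cong)
    fix x show "g x * h x = (\<Sum>k<N. c k * (g x * cos (real k * x)) + d k * (g x * sin (real k * x)))"
      unfolding 1 sum_distrib_left by (rule sum.cong) (simp_all add: algebra_simps)
    show "(\<lambda>x. \<Sum>k<N. c k * (g x * cos (real k * x)) + d k * (g x * sin (real k * x))) \<in> tp"
      by (intro tp_sum tp_add tp_scale tp_mult_cos tp_mult_sin assms(1))
  qed
qed



lemma tp_approx:
  fixes f :: "real \<Rightarrow> real"
  assumes cf: "continuous_on UNIV f" and per: "\<And>x. f (x + 2*pi) = f x" and e: "e > 0"
  shows "\<exists>T\<in>tp. \<forall>x\<in>{0..2*pi}. \<bar>f x - T x\<bar> < e"
proof -
  define S where "S = sphere (0::complex) 1"
  define p where "p x = exp(\<i> * complex_of_real x)" for x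
  define F where "F z = f (Arg2pi z)" for z
  have pS: "p ` {0..2*pi} = S"
  proof
    show "p ` {0..2*pi} \<subseteq> S" by (auto simp: S_def p_def)
    show "S \<subseteq> p ` {0..2*pi}"
    proof
      fix z assume z: "z \<in> S"
      then have "norm z = 1" by (simp add: S_def)
      moreover have "z = of_real (norm z) * exp(\<i> * of_real (Arg2pi z))"
        using Arg2pi[of z] by (simp add: is_Arg_def)
      ultimately have "z = p (Arg2pi z)" by (simp add: p_def)
      moreover have "Arg2pi z \<in> {0..2*pi}" using Arg2pi[of z] by auto
      ultimately show "z \<in> p ` {0..2*pi}" by blast
    qed
  qed
  have Fp: "F (p x) = f x" if x: "x \<in> {0..2*pi}" for x
  proof (cases "x < 2*pi")
    case True
    then have "Arg2pi (p x) = x" unfolding p_def using x by (subst Arg2pi_exp) auto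
    then show ?thesis by (simp add: F_def)
  next
    case False
    then have "x = 2*pi" using x by auto
    then have "p x = exp (\<i> * (of_real pi * 2))" by (simp add: p_def mult.commute)
    then have "p x = 1" by simp
    then have "F (p x) = f 0" by (simp add: F_def Arg2pi_of_real[of 1, simplified])
    also have "\<dots> = f (0 + 2*pi)" using per[of 0] by simp
    finally show ?thesis using \<open>x = 2*pi\<close> by simp
  qed
  have cp: "continuous_on {0..2*pi} p" unfolding p_def by (intro continuous_intros)
  have cF: "continuous_on S F"
  proof (unfold continuous_openin_preimage_eq, intro allI impI)
    fix U :: "real set" assume U: "open U"
    define V where "V = S \<inter> F -` U"
    have "{0..2*pi} \<inter> p -` V = {0..2*pi} \<inter> f -` U"
    proof -
      have pm: "p x \<in> S" if "x \<in> {0..2*pi}" for x using pS that by blast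
      show ?thesis using Fp pm unfolding V_def by auto
    qed
    moreover have "openin (top_of_set {0..2*pi}) ({0..2*pi} \<inter> f -` U)"
      using continuous_on_subset[OF cf, of "{0..2*pi}"] U
      unfolding continuous_openin_preimage_eq by auto
    ultimately have "openin (top_of_set {0..2*pi}) ({0..2*pi} \<inter> p -` V)" by simp
    then show "openin (top_of_set S) (S \<inter> F -` U)"
      using Abstract_Topology_2.continuous_imp_quotient_map[OF cp pS compact_Icc, of V] unfolding V_def by auto
  qed
  define P where "P g \<longleftrightarrow> continuous_on S g \<and> (\<exists>T\<in>tp. \<forall>x. g (p x) = T x)" for g :: "complex \<Rightarrow> real"
  have "\<exists>g. P g \<and> (\<forall>x \<in> S. \<bar>F x - g x\<bar> < e)"
  proof (rule Stone_Weierstrass_HOL[of S P F e])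
    show "compact S" by (simp add: S_def)
    show "P (\<lambda>x. c)" for c unfolding P_def using tp_const[of c] by auto
    show "continuous_on S g" if "P g" for g using that by (simp add: P_def)
    show "P (\<lambda>x. g x + h x)" if "P g \<and> P h" for g h
    proof -
      have "P g" "P h" using that by auto
      obtain T1 where T1: "T1 \<in> tp" "\<forall>x. g (p x) = T1 x" using \<open>P g\<close> unfolding P_def by blast
      obtain T2 where T2: "T2 \<in> tp" "\<forall>x. h (p x) = T2 x" using \<open>P h\<close> unfolding P_def by blast
      have "continuous_on S (\<lambda>x. g x + h x)" using \<open>P g\<close> \<open>P h\<close> by (auto simp: P_def intro: continuous_on_add)
      moreover have "(\<lambda>x. T1 x + T2 x) \<in> tp" using T1 T2 by (intro tp_add) auto
      moreover have "\<forall>x. g (p x) + h (p x) = T1 x + T2 x" using T1 T2 by auto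
      ultimately show ?thesis unfolding P_def by (auto intro!: bexI[of _ "\<lambda>x. T1 x + T2 x"])
    qed
    show "P (\<lambda>x. g x * h x)" if "P g \<and> P h" for g h
    proof -
      have "P g" "P h" using that by auto
      obtain T1 where T1: "T1 \<in> tp" "\<forall>x. g (p x) = T1 x" using \<open>P g\<close> unfolding P_def by blast
      obtain T2 where T2: "T2 \<in> tp" "\<forall>x. h (p x) = T2 x" using \<open>P h\<close> unfolding P_def by blast
      have "continuous_on S (\<lambda>x. g x * h x)" using \<open>P g\<close> \<open>P h\<close> by (auto simp: P_def intro: continuous_on_mult)
      moreover have "(\<lambda>x. T1 x * T2 x) \<in> tp" using T1 T2 by (intro tp_mult) auto
      moreover have "\<forall>x. g (p x) * h (p x) = T1 x * T2 x" using T1 T2 by auto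
      ultimately show ?thesis unfolding P_def by (auto intro!: bexI[of _ "\<lambda>x. T1 x * T2 x"])
    qed
    show "\<exists>g. P g \<and> g x \<noteq> g y" if "x \<in> S \<and> y \<in> S \<and> x \<noteq> y" for x y
    proof -
      have PRe: "P Re" unfolding P_def
        using tp_cos[of 1] by (auto intro!: continuous_intros bexI[of _ cos] simp: p_def Re_exp)
      have PIm: "P Im" unfolding P_def
        using tp_sin[of 1] by (auto intro!: continuous_intros bexI[of _ sin] simp: p_def Im_exp)
      have "Re x \<noteq> Re y \<or> Im x \<noteq> Im y" using that complex_eqI by blast
      then show ?thesis using PRe PIm by blast
    qed
    show "continuous_on S F" by (rule cF)
    show "0 < e" by (rule e)
  qed
  then obtain g T where g: "\<forall>x \<in> S. \<bar>F x - g x\<bar> < e" and T: "T \<in> tp" "\<forall>x. g (p x) = T x"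
    unfolding P_def by blast
  show ?thesis
  proof (intro bexI[OF _ T(1)] ballI)
    fix x :: real assume x: "x \<in> {0..2*pi}"
    then have "p x \<in> S" using pS by auto
    then have "\<bar>F (p x) - g (p x)\<bar> < e" using g by blast
    then show "\<bar>f x - T x\<bar> < e" using Fp[OF x] T(2) by simp
  qed
qed



definition nn :: "nat \<Rightarrow> real" where "nn k = (if k = 0 then 2*pi else pi)"
definition tsum :: "nat \<Rightarrow> (nat \<Rightarrow> real) \<Rightarrow> (nat \<Rightarrow> real) \<Rightarrow> real \<Rightarrow> real" where
  "tsum N c d x = (\<Sum>k<N. c k * cos (real k * x) + d k * sin (real k * x))"
definition fc :: "(real \<Rightarrow> real) \<Rightarrow> nat \<Rightarrow> real" where
  "fc f k = integral {0..2*pi} (\<lambda>x. f x * cos (real k * x))"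
definition fs :: "(real \<Rightarrow> real) \<Rightarrow> nat \<Rightarrow> real" where
  "fs f k = integral {0..2*pi} (\<lambda>x. f x * sin (real k * x))"
definition SN :: "(real \<Rightarrow> real) \<Rightarrow> nat \<Rightarrow> real" where
  "SN f N = (\<Sum>k<N. ((fc f k)^2 + (fs f k)^2) / nn k)"

lemma nn_pos: "nn k > 0" by (simp add: nn_def)
lemma nn_nz [simp]: "nn k \<noteq> 0" using nn_pos[of k] by simp

lemma int_cos_int: "((\<lambda>x. cos (of_int n * x)) has_integral (if n = 0 then 2*pi else 0)) {0..2*pi}"
proof (cases "n = 0")
  case True
  then show ?thesis using has_integral_const_real[of "1::real" 0 "2*pi"] by (simp add: real_scaleR_def)
next
  case False
  have "((\<lambda>x. cos (of_int n * x)) has_integral (sin (of_int n * (2*pi)) / of_int n - sin (of_int n * 0) / of_int n)) {0..2*pi}"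
  proof (rule fundamental_theorem_of_calculus)
    fix x :: real assume "x \<in> {0..2*pi}"
    have "((\<lambda>x. sin (of_int n * x) / of_int n) has_real_derivative (cos (of_int n * x) * (of_int n * 1) / of_int n)) (at x within {0..2*pi})"
      by (auto intro!: derivative_eq_intros)
    then show "((\<lambda>x. sin (of_int n * x) / of_int n) has_vector_derivative cos (of_int n * x)) (at x within {0..2*pi})"
      using False by (simp add: has_real_derivative_iff_has_vector_derivative)
  qed simp
  moreover have "sin (of_int n * (2*pi)) = 0" using sin_int_2pin[of n] by (simp add: mult.commute)
  ultimately show ?thesis using False by simp
qed

lemma int_sin_int: "((\<lambda>x. sin (of_int n * x)) has_integral 0) {0..2*pi}"
proof (cases "n = 0")
  case True
  then show ?thesis by simp
next
  case False
  have "((\<lambda>x. sin (of_int n * x)) has_integral ((- cos (of_int n * (2*pi)) / of_int n) - (- cos (of_int n * 0) / of_int n))) {0..2*pi}"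
  proof (rule fundamental_theorem_of_calculus)
    fix x :: real assume "x \<in> {0..2*pi}"
    have "((\<lambda>x. - cos (of_int n * x) / of_int n) has_real_derivative (- (- sin (of_int n * x) * (of_int n * 1)) / of_int n)) (at x within {0..2*pi})"
      by (auto intro!: derivative_eq_intros)
    then show "((\<lambda>x. - cos (of_int n * x) / of_int n) has_vector_derivative sin (of_int n * x)) (at x within {0..2*pi})"
      using False by (simp add: has_real_derivative_iff_has_vector_derivative)
  qed simp
  moreover have "cos (of_int n * (2*pi)) = 1" using cos_int_2pin[of n] by (simp add: mult.commute)
  ultimately show ?thesis using False by simp
qed

lemma int_cc: "((\<lambda>x. cos (real k * x) * cos (real j * x)) has_integral (if k = j then nn j else 0)) {0..2*pi}"
proof -
  have e: "cos (real k * x) * cos (real j * x) = (1/2) * (cos (of_int (int k - int j) * x) + cos (of_int (int k + int j) * x))" for x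
    using cos_times_cos[of "real k * x" "real j * x"] by (simp add: left_diff_distrib distrib_right)
  have "((\<lambda>x. (1/2) * (cos (of_int (int k - int j) * x) + cos (of_int (int k + int j) * x))) has_integral
     (1/2) * ((if int k - int j = 0 then 2*pi else 0) + (if int k + int j = 0 then 2*pi else 0))) {0..2*pi}"
    by (intro has_integral_mult_right has_integral_add int_cos_int)
  moreover have "(1/2) * ((if int k - int j = 0 then 2*pi else 0) + (if int k + int j = 0 then 2*pi else 0)) = (if k = j then nn j else 0)"
    by (auto simp: nn_def)
  ultimately show ?thesis by (simp add: e)
qed

lemma int_ss: "((\<lambda>x. sin (real k * x) * sin (real j * x)) has_integral (if k = j \<and> j \<noteq> 0 then nn j else 0)) {0..2*pi}"
proof -
  have e: "sin (real k * x) * sin (real j * x) = (1/2) * (cos (of_int (int k - int j) * x) - cos (of_int (int k + int j) * x))" for x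
    using sin_times_sin[of "real k * x" "real j * x"] by (simp add: left_diff_distrib distrib_right)
  have "((\<lambda>x. (1/2) * (cos (of_int (int k - int j) * x) - cos (of_int (int k + int j) * x))) has_integral
     (1/2) * ((if int k - int j = 0 then 2*pi else 0) - (if int k + int j = 0 then 2*pi else 0))) {0..2*pi}"
    by (intro has_integral_mult_right has_integral_diff int_cos_int)
  moreover have "(1/2) * ((if int k - int j = 0 then 2*pi else 0) - (if int k + int j = 0 then 2*pi else 0)) = (if k = j \<and> j \<noteq> 0 then nn j else 0)"
    by (auto simp: nn_def)
  ultimately show ?thesis by (simp add: e)
qed

lemma int_sc: "((\<lambda>x. sin (real k * x) * cos (real j * x)) has_integral 0) {0..2*pi}"
proof -
  have e: "sin (real k * x) * cos (real j * x) = (1/2) * (sin (of_int (int k + int j) * x) + sin (of_int (int k - int j) * x))" for x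
    using sin_times_cos[of "real k * x" "real j * x"] by (simp add: left_diff_distrib distrib_right)
  have "((\<lambda>x. (1/2) * (sin (of_int (int k + int j) * x) + sin (of_int (int k - int j) * x))) has_integral
     (1/2) * (0 + 0)) {0..2*pi}"
    by (intro has_integral_mult_right has_integral_add int_sin_int)
  then show ?thesis by (simp add: e)
qed

lemma int_cs: "((\<lambda>x. cos (real k * x) * sin (real j * x)) has_integral 0) {0..2*pi}"
  using int_sc[of j k] by (simp add: mult.commute)

lemma tsum_cos: "((\<lambda>x. tsum N c d x * cos (real j * x)) has_integral (if j < N then c j * nn j else 0)) {0..2*pi}"
proof -
  have "((\<lambda>x. \<Sum>k<N. c k * (cos (real k * x) * cos (real j * x)) + d k * (sin (real k * x) * cos (real j * x)))
      has_integral (\<Sum>k<N. c k * (if k = j then nn j else 0) + d k * 0)) {0..2*pi}"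
    by (intro has_integral_sum has_integral_add has_integral_mult_right int_cc int_sc) auto
  moreover have "(\<Sum>k<N. c k * (if k = j then nn j else 0) + d k * 0) = (if j < N then c j * nn j else 0)"
    by (simp add: if_distrib[of "\<lambda>y. c _ * y"] sum.delta cong: if_cong)
  moreover have "tsum N c d x * cos (real j * x) = (\<Sum>k<N. c k * (cos (real k * x) * cos (real j * x)) + d k * (sin (real k * x) * cos (real j * x)))" for x
    unfolding tsum_def sum_distrib_right by (rule sum.cong) (simp_all add: algebra_simps)
  ultimately show ?thesis by simp
qed

lemma tsum_sin: "((\<lambda>x. tsum N c d x * sin (real j * x)) has_integral (if j < N \<and> j \<noteq> 0 then d j * nn j else 0)) {0..2*pi}"
proof -
  have "((\<lambda>x. \<Sum>k<N. c k * (cos (real k * x) * sin (real j * x)) + d k * (sin (real k * x) * sin (real j * x)))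
      has_integral (\<Sum>k<N. c k * 0 + d k * (if k = j \<and> j \<noteq> 0 then nn j else 0))) {0..2*pi}"
    by (intro has_integral_sum has_integral_add has_integral_mult_right int_ss int_cs) auto
  moreover have "(\<Sum>k<N. c k * 0 + d k * (if k = j \<and> j \<noteq> 0 then nn j else 0)) = (if j < N \<and> j \<noteq> 0 then d j * nn j else 0)"
  proof (cases "j = 0")
    case True then show ?thesis by simp
  next
    case False then show ?thesis
      by (simp add: if_distrib[of "\<lambda>y. d _ * y"] sum.delta cong: if_cong)
  qed
  moreover have "tsum N c d x * sin (real j * x) = (\<Sum>k<N. c k * (cos (real k * x) * sin (real j * x)) + d k * (sin (real k * x) * sin (real j * x)))" for x
    unfolding tsum_def sum_distrib_right by (rule sum.cong) (simp_all add: algebra_simps)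
  ultimately show ?thesis by simp
qed

lemma tsum_sq: "((\<lambda>x. (tsum N c d x)^2) has_integral (\<Sum>j<N. (c j)^2 * nn j + (if j \<noteq> 0 then (d j)^2 * nn j else 0))) {0..2*pi}"
proof -
  have "((\<lambda>x. \<Sum>j<N. c j * (tsum N c d x * cos (real j * x)) + d j * (tsum N c d x * sin (real j * x)))
      has_integral (\<Sum>j<N. c j * (if j < N then c j * nn j else 0) + d j * (if j < N \<and> j \<noteq> 0 then d j * nn j else 0))) {0..2*pi}"
    by (intro has_integral_sum has_integral_add has_integral_mult_right tsum_cos tsum_sin) auto
  moreover have "(\<Sum>j<N. c j * (if j < N then c j * nn j else 0) + d j * (if j < N \<and> j \<noteq> 0 then d j * nn j else 0))
     = (\<Sum>j<N. (c j)^2 * nn j + (if j \<noteq> 0 then (d j)^2 * nn j else 0))"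
    by (rule sum.cong) (auto simp: power2_eq_square)
  moreover have "(tsum N c d x)^2 = (\<Sum>j<N. c j * (tsum N c d x * cos (real j * x)) + d j * (tsum N c d x * sin (real j * x)))" for x
  proof -
    have "(tsum N c d x)^2 = tsum N c d x * tsum N c d x" by (simp add: power2_eq_square)
    also have "\<dots> = (\<Sum>j<N. tsum N c d x * (c j * cos (real j * x) + d j * sin (real j * x)))"
      by (subst (2) tsum_def) (simp add: sum_distrib_left)
    also have "\<dots> = (\<Sum>j<N. c j * (tsum N c d x * cos (real j * x)) + d j * (tsum N c d x * sin (real j * x)))"
      by (rule sum.cong) (simp_all add: algebra_simps)
    finally show ?thesis .
  qed
  ultimately show ?thesis by simp
qed

lemma cont_tsum: "continuous_on A (tsum N c d)"
  unfolding tsum_def by (intro continuous_intros)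

lemma f_tsum:
  assumes cf: "continuous_on {0..2*pi} f"
  shows "((\<lambda>x. f x * tsum N c d x) has_integral (\<Sum>j<N. c j * fc f j + d j * fs f j)) {0..2*pi}"
proof -
  have ic: "((\<lambda>x. f x * cos (real j * x)) has_integral fc f j) {0..2*pi}" for j
    unfolding fc_def by (intro integrable_integral integrable_continuous_interval continuous_intros cf)
  have isn: "((\<lambda>x. f x * sin (real j * x)) has_integral fs f j) {0..2*pi}" for j
    unfolding fs_def by (intro integrable_integral integrable_continuous_interval continuous_intros cf)
  have "((\<lambda>x. \<Sum>j<N. c j * (f x * cos (real j * x)) + d j * (f x * sin (real j * x))) has_integral
       (\<Sum>j<N. c j * fc f j + d j * fs f j)) {0..2*pi}"
    by (intro has_integral_sum has_integral_add has_integral_mult_right ic isn) auto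
  moreover have "f x * tsum N c d x = (\<Sum>j<N. c j * (f x * cos (real j * x)) + d j * (f x * sin (real j * x)))" for x
    unfolding tsum_def sum_distrib_left by (rule sum.cong) (simp_all add: algebra_simps)
  ultimately show ?thesis by simp
qed

lemma fs0: "fs f 0 = 0" by (simp add: fs_def)

lemma bessel:
  assumes cf: "continuous_on {0..2*pi} f"
  shows "SN f N \<le> integral {0..2*pi} (\<lambda>x. (f x)^2)"
proof -
  define c where "c k = fc f k / nn k" for k
  define d where "d k = fs f k / nn k" for k
  define X where "X = integral {0..2*pi} (\<lambda>x. (f x)^2)"
  have hX: "((\<lambda>x. (f x)^2) has_integral X) {0..2*pi}" unfolding X_def
    by (intro integrable_integral integrable_continuous_interval continuous_intros cf)
  have "(\<Sum>j<N. c j * fc f j + d j * fs f j) = SN f N"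
    unfolding SN_def c_def d_def by (rule sum.cong) (auto simp: power2_eq_square add_divide_distrib)
  then have hP: "((\<lambda>x. f x * tsum N c d x) has_integral SN f N) {0..2*pi}"
    using f_tsum[OF cf, of N c d] by simp
  have "(\<Sum>j<N. (c j)^2 * nn j + (if j \<noteq> 0 then (d j)^2 * nn j else 0)) = SN f N"
    unfolding SN_def c_def d_def
  proof (rule sum.cong)
    fix j assume "j \<in> {..<N}"
    have "nn j > 0" by (rule nn_pos)
    then show "(fc f j / nn j)^2 * nn j + (if j \<noteq> 0 then (fs f j / nn j)^2 * nn j else 0) = ((fc f j)^2 + (fs f j)^2) / nn j"
      by (cases "j = 0") (auto simp: fs0 power2_eq_square field_simps)
  qed simp
  then have hQ: "((\<lambda>x. (tsum N c d x)^2) has_integral SN f N) {0..2*pi}"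
    using tsum_sq[of N c d] by simp
  have "((\<lambda>x. (f x)^2 - 2 * (f x * tsum N c d x) + (tsum N c d x)^2) has_integral (X - 2 * SN f N + SN f N)) {0..2*pi}"
    by (intro has_integral_add has_integral_diff has_integral_mult_right hX hP hQ)
  moreover have "(f x)^2 - 2 * (f x * tsum N c d x) + (tsum N c d x)^2 = (f x - tsum N c d x)^2" for x
    by (simp add: power2_diff algebra_simps)
  ultimately have "((\<lambda>x. (f x - tsum N c d x)^2) has_integral (X - SN f N)) {0..2*pi}" by simp
  then have "0 \<le> X - SN f N" by (rule has_integral_nonneg) auto
  then show ?thesis by (simp add: X_def)
qed

lemma amgm_n:
  fixes a b n :: real assumes "n > 0"
  shows "a * b \<le> (a^2 * n + b^2 / n) / 2"
proof -
  have "0 \<le> (a*n - b)^2" by simp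
  then have "2*a*b*n \<le> a^2*n^2 + b^2" by (simp add: power2_diff power_mult_distrib algebra_simps)
  then show ?thesis using assms by (simp add: field_simps power2_eq_square)
qed

lemma parseval_upper:
  fixes f :: "real \<Rightarrow> real"
  assumes cf: "continuous_on UNIV f" and per: "\<And>x. f (x + 2*pi) = f x"
    and B: "\<And>N. SN f N \<le> B"
  shows "integral {0..2*pi} (\<lambda>x. (f x)^2) \<le> B"
proof -
  define X where "X = integral {0..2*pi} (\<lambda>x. (f x)^2)"
  have cf': "continuous_on {0..2*pi} f" using cf by (rule continuous_on_subset) auto
  have hX: "((\<lambda>x. (f x)^2) has_integral X) {0..2*pi}" unfolding X_def
    by (intro integrable_integral integrable_continuous_interval continuous_intros cf')
  have "bounded (f ` {0..2*pi})" by (intro compact_imp_bounded compact_continuous_image cf') simp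
  then obtain M0 where M0: "\<forall>x\<in>{0..2*pi}. \<bar>f x\<bar> \<le> M0"
    unfolding bounded_iff by auto
  define M where "M = max M0 0"
  have M: "\<And>x. x \<in> {0..2*pi} \<Longrightarrow> \<bar>f x\<bar> \<le> M" "M \<ge> 0"
  proof -
    fix x assume "x \<in> {0..2*pi}"
    then have "\<bar>f x\<bar> \<le> M0" using M0 by blast
    then show "\<bar>f x\<bar> \<le> M" unfolding M_def by linarith
  qed (simp add: M_def)
  define K where "K = 2*pi + 8*pi*M"
  have K: "K > 0"
  proof -
    have "8*pi*M \<ge> 0" using M(2) by simp
    then show ?thesis unfolding K_def using pi_gt_zero by linarith
  qed
  have "X \<le> B + e" if e: "e > 0" for e
  proof -
    define \<epsilon> where "\<epsilon> = min 1 (e / K)"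
    have ep: "\<epsilon> > 0" "\<epsilon> \<le> 1" "\<epsilon> * K \<le> e"
    proof -
      show "\<epsilon> > 0" using e K by (simp add: \<epsilon>_def)
      show "\<epsilon> \<le> 1" by (simp add: \<epsilon>_def)
      have "\<epsilon> \<le> e / K" by (simp add: \<epsilon>_def)
      then show "\<epsilon> * K \<le> e" using K by (simp add: pos_le_divide_eq)
    qed
    obtain T where T: "T \<in> tp" "\<forall>x\<in>{0..2*pi}. \<bar>f x - T x\<bar> < \<epsilon>"
      using tp_approx[OF cf per ep(1)] by blast
    obtain N c d where Tc: "\<And>x. T x = tsum N c d x" using T(1) unfolding tp_def tsum_def by blast
    have Tx: "\<bar>f x - T x\<bar> \<le> \<epsilon>" if "x \<in> {0..2*pi}" for x
    proof -
      have "\<bar>f x - T x\<bar> < \<epsilon>" using T(2) that by blast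
      then show ?thesis by simp
    qed
    define P where "P = (\<Sum>j<N. c j * fc f j + d j * fs f j)"
    define Q where "Q = (\<Sum>j<N. (c j)^2 * nn j + (if j \<noteq> 0 then (d j)^2 * nn j else 0))"
    have hP: "((\<lambda>x. f x * T x) has_integral P) {0..2*pi}" unfolding P_def Tc by (rule f_tsum[OF cf'])
    have hQ: "((\<lambda>x. (T x)^2) has_integral Q) {0..2*pi}" unfolding Q_def Tc by (rule tsum_sq)
    have PQ: "P \<le> (Q + SN f N) / 2"
    proof -
      have "P \<le> (\<Sum>j<N. (((c j)^2 * nn j + (fc f j)^2 / nn j) / 2) + (if j \<noteq> 0 then ((d j)^2 * nn j + (fs f j)^2 / nn j) / 2 else 0))"
        unfolding P_def
      proof (rule sum_mono)
        fix j assume "j \<in> {..<N}"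
        have 1: "c j * fc f j \<le> ((c j)^2 * nn j + (fc f j)^2 / nn j) / 2" by (rule amgm_n[OF nn_pos])
        have 2: "d j * fs f j \<le> (if j \<noteq> 0 then ((d j)^2 * nn j + (fs f j)^2 / nn j) / 2 else 0)"
          using amgm_n[OF nn_pos, of "d j" "fs f j" j] by (auto simp: fs0)
        show "c j * fc f j + d j * fs f j \<le> (((c j)^2 * nn j + (fc f j)^2 / nn j) / 2) + (if j \<noteq> 0 then ((d j)^2 * nn j + (fs f j)^2 / nn j) / 2 else 0)"
          using 1 2 by linarith
      qed
      also have "\<dots> = (Q + SN f N) / 2"
        unfolding Q_def SN_def sum_divide_distrib[symmetric] sum.distrib[symmetric]
        by (subst sum_divide_distrib) (rule sum.cong, auto simp: fs0 field_simps)
      finally show ?thesis .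
    qed
    have i1: "((\<lambda>x. (f x)^2 - f x * T x) has_integral (X - P)) {0..2*pi}"
      by (intro has_integral_diff hX hP)
    have i2: "((\<lambda>x::real. M * \<epsilon>) has_integral (2*pi) * (M * \<epsilon>)) {0..2*pi}"
      using has_integral_const_real[of "M * \<epsilon>" 0 "2*pi"] by simp
    have i3: "(f x)^2 - f x * T x \<le> M * \<epsilon>" if x: "x \<in> {0..2*pi}" for x
    proof -
      have "(f x)^2 - f x * T x = f x * (f x - T x)" by (simp add: power2_eq_square algebra_simps)
      also have "\<dots> \<le> \<bar>f x\<bar> * \<bar>f x - T x\<bar>" by (simp add: abs_mult[symmetric])
      also have "\<dots> \<le> M * \<epsilon>" using M(1)[OF x] Tx[OF x] by (intro mult_mono) auto
      finally show ?thesis .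
    qed
    have XP: "X - P \<le> (2*pi) * (M * \<epsilon>)" by (rule has_integral_le[OF i1 i2 i3])
    have j1: "((\<lambda>x. (T x)^2 - (f x)^2) has_integral (Q - X)) {0..2*pi}"
      by (intro has_integral_diff hX hQ)
    have j2: "((\<lambda>x::real. \<epsilon>^2 + 2 * M * \<epsilon>) has_integral (2*pi) * (\<epsilon>^2 + 2 * M * \<epsilon>)) {0..2*pi}"
      using has_integral_const_real[of "\<epsilon>^2 + 2 * M * \<epsilon>" 0 "2*pi"] by simp
    have j3: "(T x)^2 - (f x)^2 \<le> \<epsilon>^2 + 2 * M * \<epsilon>" if x: "x \<in> {0..2*pi}" for x
    proof -
      have d: "\<bar>T x - f x\<bar> \<le> \<epsilon>" using Tx[OF x] by (subst abs_minus_commute)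
      have "(T x)^2 - (f x)^2 = (T x - f x)^2 + 2 * (f x * (T x - f x))" by (simp add: power2_eq_square algebra_simps)
      also have "(T x - f x)^2 \<le> \<epsilon>^2" using d by (metis abs_le_square_iff abs_of_pos ep(1) power2_abs)
      also have "f x * (T x - f x) \<le> \<bar>f x\<bar> * \<bar>T x - f x\<bar>" by (simp add: abs_mult[symmetric])
      also have "\<dots> \<le> M * \<epsilon>" using M(1)[OF x] d by (intro mult_mono) auto
      finally show ?thesis by simp
    qed
    have QX: "Q - X \<le> (2*pi) * (\<epsilon>^2 + 2 * M * \<epsilon>)" by (rule has_integral_le[OF j1 j2 j3])
    have "X \<le> B + 2*pi*\<epsilon>^2 + 8*pi*M*\<epsilon>" using XP QX PQ B[of N] by (simp add: algebra_simps)
    also have "2*pi*\<epsilon>^2 \<le> 2*pi*\<epsilon>"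
      using ep by (intro mult_left_mono) (auto simp: power2_eq_square mult_le_cancel_left1)
    also have "B + 2*pi*\<epsilon> + 8*pi*M*\<epsilon> = B + \<epsilon> * K" by (simp add: K_def algebra_simps)
    also have "\<dots> \<le> B + e" using ep by simp
    finally show ?thesis by simp
  qed
  then show ?thesis unfolding X_def[symmetric] by (rule field_le_epsilon)
qed



lemma slice_cont:
  assumes "continuous_on ({0..} \<times> UNIV) (\<lambda>(t,x). g t x)" "t \<ge> (0::real)"
  shows "continuous_on UNIV (g t)"
proof -
  have "continuous_on UNIV (\<lambda>x. (\<lambda>(t,x). g t x) (t, x))"
    by (rule continuous_on_compose2[OF assms(1)]) (use assms(2) in \<open>auto intro!: continuous_intros\<close>)
  then show ?thesis by simp
qed

lemma fourier_coeff_eq: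
  assumes "continuous_on {0..2* pi} f"
  shows "fourier_coeff f (int k) = (complex_of_real (fc f k) - \<i> * complex_of_real (fs f k)) / complex_of_real (2* pi)"
proof -
  have ic: "((\<lambda>x. f x * cos (real k * x)) has_integral fc f k) {0..2* pi}"
    unfolding fc_def by (intro integrable_integral integrable_continuous_interval continuous_intros assms)
  have isn: "((\<lambda>x. f x * sin (real k * x)) has_integral fs f k) {0..2* pi}"
    unfolding fs_def by (intro integrable_integral integrable_continuous_interval continuous_intros assms)
  have "((\<lambda>x. complex_of_real (f x * cos (real k * x)) - \<i> * complex_of_real (f x * sin (real k * x))) has_integral
        (complex_of_real (fc f k) - \<i> * complex_of_real (fs f k))) {0..2* pi}"
    by (intro has_integral_diff has_integral_mult_right has_integral_of_real ic isn)
  moreover have "complex_of_real (f x) * exp (- (\<i> * of_int (int k) * complex_of_real x)) =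
     complex_of_real (f x * cos (real k * x)) - \<i> * complex_of_real (f x * sin (real k * x))" for x
    by (simp add: complex_eq_iff Re_exp Im_exp)
  ultimately have "integral {0..2* pi} (\<lambda>x. complex_of_real (f x) * exp (- (\<i> * of_int (int k) * complex_of_real x)))
      = complex_of_real (fc f k) - \<i> * complex_of_real (fs f k)"
    by (simp add: integral_unique)
  then show ?thesis unfolding fourier_coeff_def by simp
qed

lemma coeff_mult:
  assumes "continuous_on {0..2* pi} f" "continuous_on {0..2* pi} g"
    and "fourier_coeff f (int k) = complex_of_real r * fourier_coeff g (int k)"
  shows "fc f k = r * fc g k" "fs f k = r * fs g k"
proof -
  have "(complex_of_real (fc f k) - \<i> * complex_of_real (fs f k)) / complex_of_real (2* pi)
      = complex_of_real r * ((complex_of_real (fc g k) - \<i> * complex_of_real (fs g k)) / complex_of_real (2* pi))"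
    using assms by (simp add: fourier_coeff_eq)
  then have "complex_of_real (fc f k) - \<i> * complex_of_real (fs f k)
      = complex_of_real r * (complex_of_real (fc g k) - \<i> * complex_of_real (fs g k))"
    by (simp add: field_simps)
  then show "fc f k = r * fc g k" "fs f k = r * fs g k" by (simp_all add: complex_eq_iff)
qed

lemma deriv_coef:
  fixes g g' :: "real \<Rightarrow> real \<Rightarrow> real" and \<phi> :: "real \<Rightarrow> real"
  assumes cg: "continuous_on ({0..} \<times> UNIV) (\<lambda>(t,x). g t x)"
    and cg': "continuous_on ({0..} \<times> UNIV) (\<lambda>(t,x). g' t x)"
    and dg: "\<forall>t\<ge>0. \<forall>x. ((\<lambda>s. g s x) has_real_derivative g' t x) (at t within {0..})"
    and c\<phi>: "continuous_on UNIV \<phi>"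
    and t: "t \<ge> 0"
  shows "((\<lambda>s. integral {0..2* pi} (\<lambda>x. g s x * \<phi> x)) has_real_derivative integral {0..2* pi} (\<lambda>x. g' t x * \<phi> x)) (at t within {0..})"
proof -
  have "((\<lambda>s. integral (cbox 0 (2* pi)) (\<lambda>x. g s x * \<phi> x)) has_field_derivative integral (cbox 0 (2* pi)) (\<lambda>x. g' t x * \<phi> x)) (at t within {0..})"
  proof (rule leibniz_rule_field_derivative[where fx="\<lambda>s x. g' s x * \<phi> x"])
    fix s x :: real assume "s \<in> {0..}" "x \<in> cbox 0 (2* pi)"
    then show "((\<lambda>s. g s x * \<phi> x) has_field_derivative g' s x * \<phi> x) (at s within {0..})"
      using dg by (auto intro!: derivative_eq_intros)
  next
    fix s :: real assume "s \<in> {0..}"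
    then have "continuous_on UNIV (g s)" using slice_cont[OF cg] by auto
    then have "continuous_on (cbox 0 (2* pi)) (g s)" by (rule continuous_on_subset) auto
    moreover have "continuous_on (cbox 0 (2* pi)) \<phi>" using c\<phi> by (rule continuous_on_subset) auto
    ultimately show "(\<lambda>x. g s x * \<phi> x) integrable_on cbox 0 (2* pi)"
      by (intro integrable_continuous continuous_on_mult)
  next
    have "continuous_on ({0..} \<times> cbox 0 (2* pi)) (\<lambda>p. (\<lambda>(t,x). g' t x) p * \<phi> (snd p))"
      by (intro continuous_intros continuous_on_subset[OF cg'] continuous_on_compose2[OF c\<phi>]) auto
    then show "continuous_on ({0..} \<times> cbox 0 (2* pi)) (\<lambda>(s, x). g' s x * \<phi> x)"
      by (simp add: split_beta)
  qed (use t in auto)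
  then show ?thesis by (simp add: box_real)
qed

lemma ibp:
  fixes h h' :: "real \<Rightarrow> real"
  assumes dh: "\<And>x. (h has_real_derivative h' x) (at x)" and ch': "continuous_on UNIV h'"
    and per: "h (2* pi) = h 0"
  shows "fc h' k = real k * fs h k" "fs h' k = - real k * fc h k"
proof -
  have ch: "continuous_on UNIV h" using dh by (meson DERIV_continuous continuous_at_imp_continuous_on)
  have hc: "((\<lambda>x. h x * cos (real k * x)) has_integral fc h k) {0..2* pi}"
    unfolding fc_def by (intro integrable_integral integrable_continuous_interval continuous_intros continuous_on_subset[OF ch]) auto
  have hs: "((\<lambda>x. h x * sin (real k * x)) has_integral fs h k) {0..2* pi}"
    unfolding fs_def by (intro integrable_integral integrable_continuous_interval continuous_intros continuous_on_subset[OF ch]) auto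
  have h'c: "((\<lambda>x. h' x * cos (real k * x)) has_integral fc h' k) {0..2* pi}"
    unfolding fc_def by (intro integrable_integral integrable_continuous_interval continuous_intros continuous_on_subset[OF ch']) auto
  have h's: "((\<lambda>x. h' x * sin (real k * x)) has_integral fs h' k) {0..2* pi}"
    unfolding fs_def by (intro integrable_integral integrable_continuous_interval continuous_intros continuous_on_subset[OF ch']) auto
  have c2: "cos (real k * (2* pi)) = 1" using cos_2npi[of k] by (simp add: mult.commute mult.left_commute)
  have s2: "sin (real k * (2* pi)) = 0" using sin_2npi[of k] by (simp add: mult.commute mult.left_commute)
  have F1: "((\<lambda>x. h' x * cos (real k * x) - real k * (h x * sin (real k * x))) has_integral
      (h (2* pi) * cos (real k * (2* pi)) - h 0 * cos (real k * 0))) {0..2* pi}"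
  proof (rule fundamental_theorem_of_calculus)
    fix x :: real assume "x \<in> {0..2* pi}"
    have "((\<lambda>x. h x * cos (real k * x)) has_real_derivative (h' x * cos (real k * x) + h x * (- sin (real k * x) * (real k * 1)))) (at x within {0..2* pi})"
      using has_field_derivative_at_within[OF dh[of x]] by (auto intro!: derivative_eq_intros)
    then show "((\<lambda>x. h x * cos (real k * x)) has_vector_derivative (h' x * cos (real k * x) - real k * (h x * sin (real k * x)))) (at x within {0..2* pi})"
      by (simp add: has_real_derivative_iff_has_vector_derivative algebra_simps)
  qed simp
  have F2: "((\<lambda>x. h' x * sin (real k * x) + real k * (h x * cos (real k * x))) has_integral
      (h (2* pi) * sin (real k * (2* pi)) - h 0 * sin (real k * 0))) {0..2* pi}"
  proof (rule fundamental_theorem_of_calculus)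
    fix x :: real assume "x \<in> {0..2* pi}"
    have "((\<lambda>x. h x * sin (real k * x)) has_real_derivative (h' x * sin (real k * x) + h x * (cos (real k * x) * (real k * 1)))) (at x within {0..2* pi})"
      using has_field_derivative_at_within[OF dh[of x]] by (auto intro!: derivative_eq_intros)
    then show "((\<lambda>x. h x * sin (real k * x)) has_vector_derivative (h' x * sin (real k * x) + real k * (h x * cos (real k * x)))) (at x within {0..2* pi})"
      by (simp add: has_real_derivative_iff_has_vector_derivative algebra_simps)
  qed simp
  have G1: "((\<lambda>x. h' x * cos (real k * x) - real k * (h x * sin (real k * x))) has_integral (fc h' k - real k * fs h k)) {0..2* pi}"
    by (intro has_integral_diff has_integral_mult_right h'c hs)
  have G2: "((\<lambda>x. h' x * sin (real k * x) + real k * (h x * cos (real k * x))) has_integral (fs h' k + real k * fc h k)) {0..2* pi}"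
    by (intro has_integral_add has_integral_mult_right h's hc)
  show "fc h' k = real k * fs h k" using has_integral_unique[OF F1 G1] per c2 by simp
  show "fs h' k = - real k * fc h k" using has_integral_unique[OF F2 G2] per s2 by simp
qed

lemma mode_decay0:
  fixes u :: "real \<Rightarrow> real" and lam t :: real
  assumes lam: "lam > 0"
   and du: "\<And>t. t \<ge> 0 \<Longrightarrow> (u has_real_derivative (-lam* u t)) (at t within {0..})"
   and t: "t \<ge> 0"
  shows "(u t)^2 \<le> 12* exp(2* lam)* exp(-(lam/3)* t) * integral {0..1} (\<lambda>s. (u s)^2)"
proof -
  define G where "G s = exp(2* lam* s) * (u s)^2" for s
  have dG: "(G has_real_derivative 0) (at s within {0..})" if "s \<ge> 0" for s
  proof -
    have "(G has_real_derivative (2* lam* exp(2* lam* s)*(u s)^2 + exp(2* lam* s)*(2* u s*(-lam* u s)))) (at s within {0..})"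
      unfolding G_def using du[OF that] by (auto intro!: derivative_eq_intros)
    then show ?thesis by (simp add: algebra_simps power2_eq_square)
  qed
  have dG': "((\<lambda>s. - G s) has_real_derivative 0) (at s within {0..})" if "s \<ge> 0" for s
    using DERIV_minus[OF dG[OF that]] by simp
  have Gc: "G s = G 0" if "s \<ge> 0" for s
    using dec_from_deriv0[of 0 s G "\<lambda>_. 0", OF _ that dG] dec_from_deriv0[of 0 s "\<lambda>s. - G s" "\<lambda>_. 0", OF _ that dG']
    by auto
  have us: "(u s)^2 = exp(-2* lam* s) * (u 0)^2" if "s \<ge> 0" for s
  proof -
    have "exp(2* lam* s) * (u s)^2 = (u 0)^2" using Gc[OF that] by (simp add: G_def)
    then have "exp(-2* lam* s) * (exp(2* lam* s) * (u s)^2) = exp(-2* lam* s) * (u 0)^2" by simp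
    then show ?thesis by (simp add: mult.assoc[symmetric] exp_add[symmetric])
  qed
  have cu: "continuous_on {0..1} u" using cont_from_deriv0[OF du] by (rule continuous_on_subset) auto
  have hu: "((\<lambda>s. (u s)^2) has_integral integral {0..1} (\<lambda>s. (u s)^2)) {0..1}"
    by (intro integrable_integral integrable_continuous_interval continuous_intros cu)
  have hc: "((\<lambda>s::real. exp(-2* lam) * (u 0)^2) has_integral exp(-2* lam) * (u 0)^2) {0..1}"
    using has_integral_const_real[of "exp(-2* lam) * (u 0)^2" 0 1] by simp
  have low: "exp(-2* lam) * (u 0)^2 \<le> (u s)^2" if "s \<in> {0..1}" for s
    using us[of s] that lam by (auto intro!: mult_right_mono)
  have I: "exp(-2* lam) * (u 0)^2 \<le> integral {0..1} (\<lambda>s. (u s)^2)"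
    by (rule has_integral_le[OF hc hu low])
  have "(u t)^2 = exp(-2* lam* t) * (u 0)^2" by (rule us[OF t])
  also have "\<dots> \<le> exp(-(lam/3)* t) * (u 0)^2" using t lam by (intro mult_right_mono) auto
  also have "(u 0)^2 = exp(2* lam) * (exp(-2* lam) * (u 0)^2)" by (simp add: mult.assoc[symmetric] exp_add[symmetric])
  also have "exp(-(lam/3)* t) * (exp(2* lam) * (exp(-2* lam) * (u 0)^2)) \<le> exp(-(lam/3)* t) * (exp(2* lam) * integral {0..1} (\<lambda>s. (u s)^2))"
    using I by (intro mult_left_mono) auto
  also have "\<dots> \<le> 12* exp(2* lam)* exp(-(lam/3)* t) * integral {0..1} (\<lambda>s. (u s)^2)"
  proof -
    have "0 \<le> integral {0..1} (\<lambda>s. (u s)^2)" using I by (smt (verit) exp_gt_zero mult_nonneg_nonneg zero_le_power2)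
    then show ?thesis by (simp add: algebra_simps)
  qed
  finally show ?thesis .
qed



lemma fc_lin:
  assumes "continuous_on {0..2* pi} f" "continuous_on {0..2* pi} g"
  shows "fc (\<lambda>x. r * f x + g x) k = r * fc f k + fc g k"
    "fs (\<lambda>x. r * f x + g x) k = r * fs f k + fs g k"
proof -
  have ic: "((\<lambda>x. h x * cos (real k * x)) has_integral fc h k) {0..2* pi}" if "continuous_on {0..2* pi} h" for h
    unfolding fc_def by (intro integrable_integral integrable_continuous_interval continuous_intros that)
  have isn: "((\<lambda>x. h x * sin (real k * x)) has_integral fs h k) {0..2* pi}" if "continuous_on {0..2* pi} h" for h
    unfolding fs_def by (intro integrable_integral integrable_continuous_interval continuous_intros that)
  have "((\<lambda>x. r * (f x * cos (real k * x)) + g x * cos (real k * x)) has_integral r * fc f k + fc g k) {0..2* pi}"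
    by (intro has_integral_add has_integral_mult_right ic assms)
  then show "fc (\<lambda>x. r * f x + g x) k = r * fc f k + fc g k"
    unfolding fc_def[of "\<lambda>x. r * f x + g x"] by (simp add: integral_unique algebra_simps)
  have "((\<lambda>x. r * (f x * sin (real k * x)) + g x * sin (real k * x)) has_integral r * fs f k + fs g k) {0..2* pi}"
    by (intro has_integral_add has_integral_mult_right isn assms)
  then show "fs (\<lambda>x. r * f x + g x) k = r * fs f k + fs g k"
    unfolding fs_def[of "\<lambda>x. r * f x + g x"] by (simp add: integral_unique algebra_simps)
qed

lemma sqrt_exp_half: "sqrt (exp y) = exp (y/2)"
proof -
  have "exp y = exp (y/2) * exp (y/2)" by (simp add: exp_add[symmetric])
  then show ?thesis by simp
qed

lemma bound_sq_int:
  fixes g :: "real \<Rightarrow> real \<Rightarrow> real"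
  assumes c: "continuous_on ({0..} \<times> UNIV) (\<lambda>(t,x). g t x)"
  obtains B where "B \<ge> 0" "\<And>s. s \<in> {0..1} \<Longrightarrow> integral {0..2* pi} (\<lambda>x. (g s x)^2) \<le> B"
proof -
  have "continuous_on ({0..1} \<times> {0..2* pi}) (\<lambda>(t,x). g t x)"
    by (rule continuous_on_subset[OF c]) auto
  then have "compact ((\<lambda>(t,x). g t x) ` ({0..1} \<times> {0..2* pi}))"
    by (intro compact_continuous_image compact_Times) auto
  then have "bounded ((\<lambda>(t,x). g t x) ` ({0..1} \<times> {0..2* pi}))" by (rule compact_imp_bounded)
  then obtain M0 where M0: "\<forall>y\<in>(\<lambda>(t,x). g t x) ` ({0..1} \<times> {0..2* pi}). norm y \<le> M0"
    unfolding bounded_iff by blast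
  have M: "\<bar>g s x\<bar> \<le> M0" if "s \<in> {0..1}" "x \<in> {0..2* pi}" for s x
  proof -
    have "g s x \<in> (\<lambda>(t,x). g t x) ` ({0..1} \<times> {0..2* pi})" using that by force
    then show ?thesis using M0 by auto
  qed
  show ?thesis
  proof
    show "0 \<le> 2* pi* M0^2" by simp
    fix s :: real assume s: "s \<in> {0..1}"
    have cs: "continuous_on {0..2* pi} (g s)"
    proof -
      have "continuous_on {0..2* pi} (\<lambda>x. (\<lambda>(t,x). g t x) (s, x))"
        by (rule continuous_on_compose2[OF c]) (use s in \<open>auto intro!: continuous_intros\<close>)
      then show ?thesis by simp
    qed
    have h1: "((\<lambda>x. (g s x)^2) has_integral integral {0..2* pi} (\<lambda>x. (g s x)^2)) {0..2* pi}"
      by (intro integrable_integral integrable_continuous_interval continuous_intros cs)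
    have h2: "((\<lambda>x::real. M0^2) has_integral 2* pi* M0^2) {0..2* pi}"
      using has_integral_const_real[of "M0^2" 0 "2* pi"] by simp
    have "(g s x)^2 \<le> M0^2" if "x \<in> {0..2* pi}" for x
    proof -
      have "\<bar>g s x\<bar> \<le> M0" by (rule M[OF s that])
      then have "\<bar>g s x\<bar>^2 \<le> M0^2" by (intro power_mono) auto
      then show ?thesis by simp
    qed
    then show "integral {0..2* pi} (\<lambda>x. (g s x)^2) \<le> 2* pi* M0^2"
      by (rule has_integral_le[OF h1 h2])
  qed
qed



lemma core:
  fixes eta q eta_t q_t q_x W :: "real \<Rightarrow> real \<Rightarrow> real" and m :: "int \<Rightarrow> real" and lam a :: real
  assumes lam: "lam > 0" and a: "a > 0" and m0: "m 0 = 0"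
   and mpos: "\<And>k::nat. k \<ge> 1 \<Longrightarrow> m (int k) > 0"
   and mbig: "\<And>k::nat. k \<ge> 1 \<Longrightarrow> a * m (int k) \<ge> ((2+lam)* exp(2* lam))^2"
   and per: "\<forall>t x. eta t (x + 2* pi) = eta t x \<and> q t (x + 2* pi) = q t x"
   and ceta: "continuous_on ({0..} \<times> UNIV) (\<lambda>(t,x). eta t x)"
   and cq: "continuous_on ({0..} \<times> UNIV) (\<lambda>(t,x). q t x)"
   and ceta_t: "continuous_on ({0..} \<times> UNIV) (\<lambda>(t,x). eta_t t x)"
   and cq_t: "continuous_on ({0..} \<times> UNIV) (\<lambda>(t,x). q_t t x)"
   and cq_x: "continuous_on ({0..} \<times> UNIV) (\<lambda>(t,x). q_x t x)"
   and cW: "continuous_on ({0..} \<times> UNIV) (\<lambda>(t,x). W t x)"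
   and deta: "\<forall>t\<ge>0. \<forall>x. ((\<lambda>s. eta s x) has_real_derivative eta_t t x) (at t within {0..})"
   and dq: "\<forall>t\<ge>0. \<forall>x. ((\<lambda>s. q s x) has_real_derivative q_t t x) (at t within {0..})"
   and dqx: "\<forall>t\<ge>0. \<forall>x. ((\<lambda>y. q t y) has_real_derivative q_x t x) (at x)"
   and fW: "\<forall>t\<ge>0. \<forall>k. fourier_coeff (W t) k = complex_of_real (m k) * fourier_coeff (q t) k"
   and e1: "\<forall>t\<ge>0. \<forall>x. eta_t t x = - lam * eta t x + W t x"
   and e2: "\<forall>t\<ge>0. \<forall>x. q_t t x = - a * eta t x"
  shows "\<exists>C. \<forall>t\<ge>0. l2norm (eta t) \<le> C * exp (-(lam/6) * t) \<and> l2norm (\<lambda>x. deriv (q t) x) \<le> C * exp (-(lam/6) * t)"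
proof -
  have sc: "continuous_on UNIV (eta t)" "continuous_on UNIV (q t)" "continuous_on UNIV (q_x t)" "continuous_on UNIV (W t)"
    if "t \<ge> 0" for t
    using slice_cont[OF ceta that] slice_cont[OF cq that] slice_cont[OF cq_x that] slice_cont[OF cW that] by auto
  have sc2: "continuous_on {0..2* pi} (eta t)" "continuous_on {0..2* pi} (q t)" "continuous_on {0..2* pi} (q_x t)" "continuous_on {0..2* pi} (W t)"
    if "t \<ge> 0" for t
    using sc[OF that] by (auto intro: continuous_on_subset)
  have cosc: "continuous_on UNIV (\<lambda>x. cos (real k * x))" for k by (intro continuous_intros)
  have sinc: "continuous_on UNIV (\<lambda>x. sin (real k * x))" for k by (intro continuous_intros)
  have fc0: "fc (\<lambda>x. 0) k = 0" "fs (\<lambda>x. 0) k = 0" for k by (simp_all add: fc_def fs_def)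
  have c0: "continuous_on {0..2* pi} (\<lambda>x::real. 0::real)" by simp
  have dU: "((\<lambda>s. fc (eta s) k) has_real_derivative (-lam * fc (eta t) k + m (int k) * fc (q t) k)) (at t within {0..})"
    if "t \<ge> 0" for t k
  proof -
    have "((\<lambda>s. fc (eta s) k) has_real_derivative fc (eta_t t) k) (at t within {0..})"
      unfolding fc_def by (rule deriv_coef[OF ceta ceta_t deta cosc that])
    moreover have "fc (eta_t t) k = -lam * fc (eta t) k + fc (W t) k"
    proof -
      have E: "eta_t t = (\<lambda>x. -lam * eta t x + W t x)" using e1 that by auto
      show ?thesis unfolding E by (rule fc_lin(1)[OF sc2(1)[OF that] sc2(4)[OF that]])
    qed
    moreover have "fc (W t) k = m (int k) * fc (q t) k"
      using coeff_mult(1)[OF sc2(4)[OF that] sc2(2)[OF that]] fW that by auto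
    ultimately show ?thesis by simp
  qed
  have dU': "((\<lambda>s. fs (eta s) k) has_real_derivative (-lam * fs (eta t) k + m (int k) * fs (q t) k)) (at t within {0..})"
    if "t \<ge> 0" for t k
  proof -
    have "((\<lambda>s. fs (eta s) k) has_real_derivative fs (eta_t t) k) (at t within {0..})"
      unfolding fs_def by (rule deriv_coef[OF ceta ceta_t deta sinc that])
    moreover have "fs (eta_t t) k = -lam * fs (eta t) k + fs (W t) k"
    proof -
      have E: "eta_t t = (\<lambda>x. -lam * eta t x + W t x)" using e1 that by auto
      show ?thesis unfolding E by (rule fc_lin(2)[OF sc2(1)[OF that] sc2(4)[OF that]])
    qed
    moreover have "fs (W t) k = m (int k) * fs (q t) k"
      using coeff_mult(2)[OF sc2(4)[OF that] sc2(2)[OF that]] fW that by auto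
    ultimately show ?thesis by simp
  qed
  have dV: "((\<lambda>s. fc (q s) k) has_real_derivative (-a * fc (eta t) k)) (at t within {0..})"
    if "t \<ge> 0" for t k
  proof -
    have "((\<lambda>s. fc (q s) k) has_real_derivative fc (q_t t) k) (at t within {0..})"
      unfolding fc_def by (rule deriv_coef[OF cq cq_t dq cosc that])
    moreover have "fc (q_t t) k = -a * fc (eta t) k"
    proof -
      have E: "q_t t = (\<lambda>x. -a * eta t x + 0)" using e2 that by auto
      show ?thesis unfolding E fc_lin(1)[OF sc2(1)[OF that] c0] fc0 by simp
    qed
    ultimately show ?thesis by simp
  qed
  have dV': "((\<lambda>s. fs (q s) k) has_real_derivative (-a * fs (eta t) k)) (at t within {0..})"
    if "t \<ge> 0" for t k
  proof -
    have "((\<lambda>s. fs (q s) k) has_real_derivative fs (q_t t) k) (at t within {0..})"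
      unfolding fs_def by (rule deriv_coef[OF cq cq_t dq sinc that])
    moreover have "fs (q_t t) k = -a * fs (eta t) k"
    proof -
      have E: "q_t t = (\<lambda>x. -a * eta t x + 0)" using e2 that by auto
      show ?thesis unfolding E fc_lin(2)[OF sc2(1)[OF that] c0] fc0 by simp
    qed
    ultimately show ?thesis by simp
  qed
  have ibq: "fc (q_x t) k = real k * fs (q t) k" "fs (q_x t) k = - real k * fc (q t) k" if "t \<ge> 0" for t k
  proof -
    have dh: "\<And>x. (q t has_real_derivative q_x t x) (at x)" using dqx that by auto
    have "q t (2* pi) = q t 0" using per by (metis add_0)
    then show "fc (q_x t) k = real k * fs (q t) k" "fs (q_x t) k = - real k * fc (q t) k"
      using ibp[OF dh sc(3)[OF that]] by auto
  qed
  define Kt where "Kt t = 12* exp(2* lam)* exp(-(lam/3)* t)" for t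
  have Kt0: "Kt t \<ge> 0" for t by (simp add: Kt_def)
  define P where "P k s = (fc (eta s) k)^2 + (real k)^2 * (fc (q s) k)^2" for k s
  define Q where "Q k s = (fs (eta s) k)^2 + (real k)^2 * (fs (q s) k)^2" for k s
  have Pk: "P k = (\<lambda>s. (fc (eta s) k)^2 + (real k)^2 * (fc (q s) k)^2)" for k by (rule ext) (simp add: P_def)
  have Qk: "Q k = (\<lambda>s. (fs (eta s) k)^2 + (real k)^2 * (fs (q s) k)^2)" for k by (rule ext) (simp add: Q_def)
  have Pb: "P k t \<le> Kt t * integral {0..1} (P k)" if t: "t \<ge> 0" for k t
  proof (cases "k = 0")
    case True
    have d0: "((\<lambda>s. fc (eta s) 0) has_real_derivative (-lam * fc (eta s) 0)) (at s within {0..})" if "s \<ge> 0" for s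
      using dU[OF that, of 0] m0 by simp
    have "(fc (eta t) 0)^2 \<le> 12* exp(2* lam)* exp(-(lam/3)* t) * integral {0..1} (\<lambda>s. (fc (eta s) 0)^2)"
      by (rule mode_decay0[where u="\<lambda>s. fc (eta s) 0", OF lam d0 t])
    then show ?thesis using True by (simp add: Pk Kt_def)
  next
    case False
    then have k1: "k \<ge> 1" by simp
    have "(fc (eta t) k)^2 + (real k)^2 * (fc (q t) k)^2 \<le> 12* exp(2* lam)* exp(-(lam/3)* t) * integral {0..1} (\<lambda>s. (fc (eta s) k)^2 + (real k)^2 * (fc (q s) k)^2)"
      by (rule mode_decay[where u="\<lambda>s. fc (eta s) k" and v="\<lambda>s. fc (q s) k", OF lam a mpos[OF k1] mbig[OF k1] dU dV t])
    then show ?thesis by (simp add: Pk Kt_def)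
  qed
  have Qb: "Q k t \<le> Kt t * integral {0..1} (Q k)" if t: "t \<ge> 0" for k t
  proof (cases "k = 0")
    case True
    have d0: "((\<lambda>s. fs (eta s) 0) has_real_derivative (-lam * fs (eta s) 0)) (at s within {0..})" if "s \<ge> 0" for s
      using dU'[OF that, of 0] m0 by simp
    have "(fs (eta t) 0)^2 \<le> 12* exp(2* lam)* exp(-(lam/3)* t) * integral {0..1} (\<lambda>s. (fs (eta s) 0)^2)"
      by (rule mode_decay0[where u="\<lambda>s. fs (eta s) 0", OF lam d0 t])
    then show ?thesis using True by (simp add: Qk Kt_def)
  next
    case False
    then have k1: "k \<ge> 1" by simp
    have "(fs (eta t) k)^2 + (real k)^2 * (fs (q t) k)^2 \<le> 12* exp(2* lam)* exp(-(lam/3)* t) * integral {0..1} (\<lambda>s. (fs (eta s) k)^2 + (real k)^2 * (fs (q s) k)^2)"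
      by (rule mode_decay[where u="\<lambda>s. fs (eta s) k" and v="\<lambda>s. fs (q s) k", OF lam a mpos[OF k1] mbig[OF k1] dU' dV' t])
    then show ?thesis by (simp add: Qk Kt_def)
  qed
  have cU: "continuous_on {0..1} (\<lambda>s. fc (eta s) k)" "continuous_on {0..1} (\<lambda>s. fs (eta s) k)"
    "continuous_on {0..1} (\<lambda>s. fc (q s) k)" "continuous_on {0..1} (\<lambda>s. fs (q s) k)" for k
  proof -
    have "continuous_on {0..} (\<lambda>s. fc (eta s) k)"
      by (rule cont_from_deriv0[where g'="\<lambda>s. -lam * fc (eta s) k + m (int k) * fc (q s) k"]) (rule dU)
    then show "continuous_on {0..1} (\<lambda>s. fc (eta s) k)" by (rule continuous_on_subset) auto
    have "continuous_on {0..} (\<lambda>s. fs (eta s) k)"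
      by (rule cont_from_deriv0[where g'="\<lambda>s. -lam * fs (eta s) k + m (int k) * fs (q s) k"]) (rule dU')
    then show "continuous_on {0..1} (\<lambda>s. fs (eta s) k)" by (rule continuous_on_subset) auto
    have "continuous_on {0..} (\<lambda>s. fc (q s) k)"
      by (rule cont_from_deriv0[where g'="\<lambda>s. -a * fc (eta s) k"]) (rule dV)
    then show "continuous_on {0..1} (\<lambda>s. fc (q s) k)" by (rule continuous_on_subset) auto
    have "continuous_on {0..} (\<lambda>s. fs (q s) k)"
      by (rule cont_from_deriv0[where g'="\<lambda>s. -a * fs (eta s) k"]) (rule dV')
    then show "continuous_on {0..1} (\<lambda>s. fs (q s) k)" by (rule continuous_on_subset) auto
  qed
  have hP: "(P k has_integral integral {0..1} (P k)) {0..1}" for k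
  proof -
    have "continuous_on {0..1} (P k)" unfolding P_def using cU[of k] by (intro continuous_intros) auto
    then show ?thesis by (intro integrable_integral integrable_continuous_interval)
  qed
  have hQ: "(Q k has_integral integral {0..1} (Q k)) {0..1}" for k
  proof -
    have "continuous_on {0..1} (Q k)" unfolding Q_def using cU[of k] by (intro continuous_intros) auto
    then show ?thesis by (intro integrable_integral integrable_continuous_interval)
  qed
  obtain Be where Be: "Be \<ge> 0" "\<And>s. s \<in> {0..1} \<Longrightarrow> integral {0..2* pi} (\<lambda>x. (eta s x)^2) \<le> Be"
    using bound_sq_int[OF ceta] by blast
  obtain Bq where Bq: "Bq \<ge> 0" "\<And>s. s \<in> {0..1} \<Longrightarrow> integral {0..2* pi} (\<lambda>x. (q_x s x)^2) \<le> Bq"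
    using bound_sq_int[OF cq_x] by blast
  define Z where "Z N s = SN (eta s) N + SN (q_x s) N" for N s
  have Zeq: "Z N s = (\<Sum>k<N. (P k s + Q k s) / nn k)" if "s \<ge> 0" for N s
  proof -
    have "Z N s = (\<Sum>k<N. ((fc (eta s) k)^2 + (fs (eta s) k)^2) / nn k + ((fc (q_x s) k)^2 + (fs (q_x s) k)^2) / nn k)"
      unfolding Z_def SN_def by (simp add: sum.distrib)
    also have "\<dots> = (\<Sum>k<N. (P k s + Q k s) / nn k)"
    proof (rule sum.cong)
      fix k assume "k \<in> {..<N}"
      show "((fc (eta s) k)^2 + (fs (eta s) k)^2) / nn k + ((fc (q_x s) k)^2 + (fs (q_x s) k)^2) / nn k = (P k s + Q k s) / nn k"
        unfolding P_def Q_def ibq[OF that] by (simp add: power_mult_distrib add_divide_distrib[symmetric] algebra_simps)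
    qed simp
    finally show ?thesis .
  qed
  have SN0: "SN f N \<ge> 0" for f N unfolding SN_def
    by (intro sum_nonneg divide_nonneg_pos nn_pos) auto
  have Zb: "Z N s \<le> Be + Bq" if s: "s \<in> {0..1}" for N s
  proof -
    have "SN (eta s) N \<le> integral {0..2* pi} (\<lambda>x. (eta s x)^2)" using s by (intro bessel sc2) auto
    moreover have "SN (q_x s) N \<le> integral {0..2* pi} (\<lambda>x. (q_x s x)^2)" using s by (intro bessel sc2) auto
    ultimately show ?thesis unfolding Z_def using Be(2)[OF s] Bq(2)[OF s] by linarith
  qed
  have Zt: "Z N t \<le> Kt t * (Be + Bq)" if t: "t \<ge> 0" for N t
  proof -
    define I where "I = (\<Sum>k<N. (integral {0..1} (P k) + integral {0..1} (Q k)) / nn k)"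
    have hI: "((\<lambda>s. \<Sum>k<N. (P k s + Q k s) / nn k) has_integral I) {0..1}"
      unfolding I_def by (intro has_integral_sum has_integral_divide has_integral_add hP hQ) auto
    have hB: "((\<lambda>s::real. Be + Bq) has_integral (Be + Bq)) {0..1}"
      using has_integral_const_real[of "Be + Bq" 0 1] by simp
    have "(\<Sum>k<N. (P k s + Q k s) / nn k) \<le> Be + Bq" if "s \<in> {0..1}" for s
    proof -
      have "s \<ge> 0" using that by simp
      then show ?thesis using Zb[OF that, of N] Zeq[of s N] by simp
    qed
    then have IB: "I \<le> Be + Bq" by (rule has_integral_le[OF hI hB])
    have "Z N t = (\<Sum>k<N. (P k t + Q k t) / nn k)" by (rule Zeq[OF t])
    also have "\<dots> \<le> (\<Sum>k<N. (Kt t * integral {0..1} (P k) + Kt t * integral {0..1} (Q k)) / nn k)"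
      by (intro sum_mono divide_right_mono add_mono Pb Qb t) (auto simp: less_imp_le[OF nn_pos])
    also have "\<dots> = Kt t * I" unfolding I_def by (simp add: sum_distrib_left algebra_simps add_divide_distrib)
    also have "\<dots> \<le> Kt t * (Be + Bq)" using IB Kt0 by (intro mult_left_mono) auto
    finally show ?thesis .
  qed
  have perq: "q_x t (x + 2* pi) = q_x t x" if t: "t \<ge> 0" for t x
  proof -
    have "((\<lambda>y. q t (y + 2* pi)) has_real_derivative q_x t (x + 2* pi) * (1 + 0)) (at x)"
    proof (rule DERIV_chain2[where f="q t" and g="\<lambda>y. y + 2* pi"])
      show "(q t has_real_derivative q_x t (x + 2* pi)) (at (x + 2* pi))" using dqx t by auto
      show "((\<lambda>y. y + 2* pi) has_real_derivative 1 + 0) (at x)" by (auto intro!: derivative_eq_intros)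
    qed
    moreover have "(\<lambda>y. q t (y + 2* pi)) = q t" using per by auto
    ultimately have "(q t has_real_derivative q_x t (x + 2* pi)) (at x)" by simp
    moreover have "(q t has_real_derivative q_x t x) (at x)" using dqx t by auto
    ultimately show ?thesis by (rule DERIV_unique)
  qed
  define C where "C = sqrt (12* exp(2* lam)*(Be + Bq))"
  have sq: "sqrt (Kt t * (Be + Bq)) = C * exp (-(lam/6) * t)" for t
  proof -
    have "sqrt (Kt t * (Be + Bq)) = sqrt (12* exp(2* lam)*(Be + Bq)) * sqrt (exp(-(lam/3)* t))"
      unfolding Kt_def by (simp add: real_sqrt_mult[symmetric] algebra_simps)
    also have "sqrt (exp(-(lam/3)* t)) = exp(-(lam/6)* t)" by (simp add: sqrt_exp_half)
    finally show ?thesis by (simp add: C_def)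
  qed
  show ?thesis
  proof (intro exI allI impI conjI)
    fix t :: real assume t: "t \<ge> 0"
    have "integral {0..2* pi} (\<lambda>x. (eta t x)^2) \<le> Kt t * (Be + Bq)"
    proof (rule parseval_upper[OF sc(1)[OF t]])
      show "eta t (x + 2* pi) = eta t x" for x using per by auto
      show "SN (eta t) N \<le> Kt t * (Be + Bq)" for N
        using Zt[OF t, of N] SN0[of "q_x t" N] unfolding Z_def by linarith
    qed
    then show "l2norm (eta t) \<le> C * exp (-(lam/6) * t)"
      unfolding l2norm_def sq[symmetric] by (rule real_sqrt_le_mono)
    have "integral {0..2* pi} (\<lambda>x. (q_x t x)^2) \<le> Kt t * (Be + Bq)"
    proof (rule parseval_upper[OF sc(3)[OF t]])
      show "q_x t (x + 2* pi) = q_x t x" for x using perq[OF t] .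
      show "SN (q_x t) N \<le> Kt t * (Be + Bq)" for N
        using Zt[OF t, of N] SN0[of "eta t" N] unfolding Z_def by linarith
    qed
    moreover have "(\<lambda>x. deriv (q t) x) = q_x t"
      using dqx t by (auto intro!: DERIV_imp_deriv)
    ultimately show "l2norm (\<lambda>x. deriv (q t) x) \<le> C * exp (-(lam/6) * t)"
      unfolding l2norm_def sq[symmetric] by (simp add: real_sqrt_le_mono)
  qed
qed



lemma m_lower:
  fixes \<mu> :: real and m :: "int \<Rightarrow> real"
  assumes mu: "\<mu> > 0" and m: "m = omega2_i \<mu> \<or> m = omega2_ii \<mu>"
  shows "m 0 = 0" "\<exists>mm>0. \<forall>k::nat. k \<ge> 1 \<longrightarrow> m (int k) \<ge> mm"
proof -
  show "m 0 = 0" using m by (auto simp: omega2_i_def omega2_ii_def)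
  show "\<exists>mm>0. \<forall>k::nat. k \<ge> 1 \<longrightarrow> m (int k) \<ge> mm"
  proof (cases "m = omega2_i \<mu>")
    case True
    show ?thesis
    proof (intro exI[of _ "1/3"] conjI allI impI)
      fix k :: nat assume k: "k \<ge> 1"
      define y where "y = \<mu>^2 * (real k)^2"
      have y: "y \<ge> 0" by (simp add: y_def)
      have "(1::real)/3 \<le> (1 + y/6) / (1 + y/2)" using y by (simp add: field_simps)
      moreover have "(1::real) \<le> (real k)^2" using k by simp
      ultimately have "1/3 * 1 \<le> (1 + y/6) / (1 + y/2) * (real k)^2"
        by (intro mult_mono) (use y in auto)
      then show "1/3 \<le> m (int k)" using True by (simp add: omega2_i_def y_def)
    qed simp
  next
    case False
    then have mi: "m = omega2_ii \<mu>" using m by blast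
    show ?thesis
    proof (intro exI[of _ "tanh \<mu> / \<mu>"] conjI allI impI)
      show "tanh \<mu> / \<mu> > 0" using mu by simp
      fix k :: nat assume k: "k \<ge> 1"
      have "tanh \<mu> \<le> tanh (\<mu> * real k)" using mu k by simp
      moreover have "1 \<le> real k" using k by simp
      ultimately have "1 * tanh \<mu> \<le> real k * tanh (\<mu> * real k)"
        by (intro mult_mono) (use mu in auto)
      then show "tanh \<mu> / \<mu> \<le> m (int k)" using mi mu by (simp add: omega2_ii_def divide_right_mono)
    qed
  qed
qed

theorem theorem3:
  fixes \<mu> d :: real and m :: "int \<Rightarrow> real"
  assumes "\<mu> > 0"
    and "m = omega2_i \<mu> \<or> m = omega2_ii \<mu>"
    and "d > 0"
  shows "\<exists>lam nu :: real. \<forall>eta q. is_solution m lam nu eta q \<longrightarrow>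
           (\<exists>C. \<forall>t\<ge>0. l2norm (eta t) \<le> C * exp (- d * t) \<and>
                       l2norm (\<lambda>x. deriv (q t) x) \<le> C * exp (- d * t))"
proof -
  have m0: "m 0 = 0" using m_lower[OF assms(1,2)] by simp
  obtain mm where mm: "mm > 0" "\<And>k::nat. k \<ge> 1 \<Longrightarrow> m (int k) \<ge> mm"
    using m_lower(2)[OF assms(1,2)] by blast
  define lam where "lam = 6 * d"
  define Lam where "Lam = ((2+lam)* exp(2* lam))^2"
  define a where "a = Lam / mm"
  have lam: "lam > 0" using assms(3) by (simp add: lam_def)
  have Lam: "Lam > 0" using lam by (simp add: Lam_def)
  have a: "a > 0" using Lam mm by (simp add: a_def)
  have mpos: "m (int k) > 0" if "k \<ge> 1" for k :: nat using mm(2)[OF that] mm(1) by linarith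
  have mbig: "a * m (int k) \<ge> ((2+lam)* exp(2* lam))^2" if "k \<ge> 1" for k :: nat
  proof -
    have "a * mm \<le> a * m (int k)" using mm(2)[OF that] a by (intro mult_left_mono) auto
    moreover have "a * mm = Lam" using mm(1) by (simp add: a_def)
    ultimately show ?thesis by (simp add: Lam_def)
  qed
  show ?thesis
  proof (rule exI[of _ lam], rule exI[of _ "a - 1"], intro allI impI)
    fix eta q :: "real \<Rightarrow> real \<Rightarrow> real"
    assume "is_solution m lam (a - 1) eta q"
    obtain eta_t q_t q_x W where
      per: "\<forall>t x. eta t (x + 2* pi) = eta t x \<and> q t (x + 2* pi) = q t x" and
      c1: "continuous_on ({0..} \<times> UNIV) (\<lambda>(t,x). eta t x)" and
      c2: "continuous_on ({0..} \<times> UNIV) (\<lambda>(t,x). q t x)" and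
      c3: "continuous_on ({0..} \<times> UNIV) (\<lambda>(t,x). eta_t t x)" and
      c4: "continuous_on ({0..} \<times> UNIV) (\<lambda>(t,x). q_t t x)" and
      c5: "continuous_on ({0..} \<times> UNIV) (\<lambda>(t,x). q_x t x)" and
      c6: "continuous_on ({0..} \<times> UNIV) (\<lambda>(t,x). W t x)" and
      d1: "\<forall>t\<ge>0. \<forall>x. ((\<lambda>s. eta s x) has_real_derivative eta_t t x) (at t within {0..})" and
      d2: "\<forall>t\<ge>0. \<forall>x. ((\<lambda>s. q s x) has_real_derivative q_t t x) (at t within {0..})" and
      d3: "\<forall>t\<ge>0. \<forall>x. ((\<lambda>y. q t y) has_real_derivative q_x t x) (at x)" and
      fW: "\<forall>t\<ge>0. \<forall>k. fourier_coeff (W t) k = complex_of_real (m k) * fourier_coeff (q t) k" and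
      e1: "\<forall>t\<ge>0. \<forall>x. eta_t t x = - lam * eta t x + W t x" and
      e2: "\<forall>t\<ge>0. \<forall>x. q_t t x = - (1 + (a - 1)) * eta t x"
      using \<open>is_solution m lam (a - 1) eta q\<close> unfolding is_solution_def by (elim exE conjE) (rule that)
    have e2': "\<forall>t\<ge>0. \<forall>x. q_t t x = - a * eta t x" using e2 by simp
    obtain C where C: "\<forall>t\<ge>0. l2norm (eta t) \<le> C * exp (-(lam/6) * t) \<and> l2norm (\<lambda>x. deriv (q t) x) \<le> C * exp (-(lam/6) * t)"
      using core[OF lam a m0 mpos mbig per c1 c2 c3 c4 c5 c6 d1 d2 d3 fW e1 e2'] by blast
    have ld: "-(lam/6) * t = - d * t" for t by (simp add: lam_def)
    have "\<forall>t\<ge>0. l2norm (eta t) \<le> C * exp (- d * t) \<and> l2norm (\<lambda>x. deriv (q t) x) \<le> C * exp (- d * t)"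
      using C unfolding ld .
    then show "\<exists>C. \<forall>t\<ge>0. l2norm (eta t) \<le> C * exp (- d * t) \<and> l2norm (\<lambda>x. deriv (q t) x) \<le> C * exp (- d * t)"
      by (rule exI)
  qed
qed


end
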